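(* Let $\mathcal{H}=L^2(\mathcal{Z})$ and let $$X_i=\mu+\Delta_n\,g\!\left(\tfrac in\right)+\varepsilon_i,\qquad i=1,\ldots,n,$$ with $\mu,\Delta_n\in\mathcal{H}$ and $n\|\Delta_n\|^2\to\infty$. Assume that $g:[0,1]\to\mathbb{R}$ is non-constant, bounded, Riemann integrable and piecewise continuous (finitely many intervals of positive length on each of which it is continuous), with $g(0)=0$. Assume the errors satisfy the following two conditions. (A1) $\{\varepsilon_i\}_{i\in\mathbb{Z}}$ is a centered, strictly stationary sequence of $\mathcal{H}$-valued random variables with $\mathsf{E}\|\varepsilon_1\|^k<\infty$ for some $k>2$. With $C_r=\mathsf{E}[\varepsilon_0\otimes\varepsilon_r]$ one has $\sum_r\|C_r\|<\infty$, and $C_\varepsilon=\sum_rC_r\ne0$. Write $C_\varepsilon=\sum_{p\ge1}\lambda_{p,\varepsilon}v_{p,\varepsilon}\otimes v_{p,\varepsilon}$ with non-increasing eigenvalues and orthonormal basis $\{v_{p,\varepsilon}\}$. Moreover $\sum_{p\ge1}\sum_{h\in\mathbb{Z}}|\mathsf{Cov}(\langle\varepsilon_0,v_{p,\varepsilon}\rangle,\langle\varepsilon_h,v_{p,\varepsilon}\rangle)|<\infty$. (A2) $\{n^{-1/2}\sum_{i=1}^{\lfloor tn\rfloor}\varepsilon_i\}_{t\in[0,1]}$ converges weakly in $D^{\mathcal{H}}[0,1]$ to an $\mathcal{H}$-valued Brownian motion with covariance operator $C_\varepsilon$. Let $\hat C$ be a random bounded self-adjoint positive semidefinite operator computed from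 $X_1,\ldots,X_n$ with $\|\hat C\|=o_P(n\|\Delta_n\|^2)$. Fix $d\in\mathbb{N}$, let $\hat v_p$ be an orthonormal eigenfunction of $\hat C$ for its $p$-th largest eigenvalue $\hat\lambda_p$, and let $\hat\eta_{i,p}=\langle X_i,\hat v_p\rangle$ and $\bar{\hat\eta}_{n,p}=n^{-1}\sum_i\hat\eta_{i,p}$. Assume there exist orthonormal $\tilde v_1,\ldots,\tilde v_d\in\mathcal{H}$ such that for $p=1,\ldots,d$ $$\|\hat v_p-\tilde s_p\tilde v_p\|=o_P(1),\qquad \tilde s_p=\operatorname{sgn}\Big(\int\hat v_p(t)\tilde v_p(t)\,d\nu(t)\Big),$$ and that $\sum_{p=1}^d\langle\Delta_n,\tilde v_p\rangle^2\ge c\|\Delta_n\|^2$ for some $0<c\le1$. Let $h:[-1,1]\to\mathbb{R}$ be non-constant with $h(x)=0$ for $x\le0$, of bounded total variation, and $\alpha$-Hölder continuous on $[0,1]$ for some $\alpha>0$. Assume $$\sup_{0\le t\le1}\Big|\int_0^1h(x-t)g(x)\,dx-\int_0^1g(x)\,dx\int_0^1h(x-t)\,dx\Big|>0.$$ Define $$T_{n,\mathrm{PC}}^2(h;\hat C)=\max_{1\le k<n}\sum_{p=1}^d\frac1{\hat\lambda_p}\frac1n\Big[\sum_{i=1}^nh\!\left(\tfrac{i-k}{n}\right)(\hat\eta_{i,p}-\bar{\hat\eta}_{n,p})\Big]^2.$$ Then $T_{n,\mathrm{PC}}(h;\hat C)\to\infty$ in probability.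
   Context: $\mathcal{H}=L^2(\mathcal{Z})$ is the real separable Hilbert space of square-integrable functions on a domain $\mathcal{Z}$ with a $\sigma$-finite measure $\nu$, with inner product $\langle f,g\rangle=\int fg\,d\nu$ and norm $\|\cdot\|$. The tensor product is $(v\otimes w)(h)=\langle v,h\rangle w$. Operator norms are used for operators. *)

theory Defs
  imports "HOL-Probability.Probability"
begin

definition real_gaussian :: "'w measure \<Rightarrow> ('w \<Rightarrow> real) \<Rightarrow> real \<Rightarrow> real \<Rightarrow> bool" where
  "real_gaussian M Y m v \<longleftrightarrow> 0 \<le> v \<and>
     (if v = 0 then Y \<in> borel_measurable M \<and> (AE \<omega> in M. Y \<omega> = m)
      else distributed M lborel Y (\<lambda>x. ennreal (normal_density m (sqrt v) x)))"

definition cadlag :: "(real \<Rightarrow> 'a::real_normed_vector) \<Rightarrow> bool" where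
  "cadlag x \<longleftrightarrow> (\<forall>t\<in>{0..<1}. (x \<longlongrightarrow> x t) (at_right t)) \<and>
                 (\<forall>t\<in>{0<..1}. \<exists>l. (x \<longlongrightarrow> l) (at_left t))"

definition time_change :: "(real \<Rightarrow> real) \<Rightarrow> bool" where
  "time_change la \<longleftrightarrow> strict_mono_on {0..1} la \<and> continuous_on {0..1} la \<and> la 0 = 0 \<and> la 1 = 1"

definition skorokhod_dist :: "(real \<Rightarrow> 'a::real_normed_vector) \<Rightarrow> (real \<Rightarrow> 'a) \<Rightarrow> real" where
  "skorokhod_dist x y = (INF la\<in>{la. time_change la}.
      max (SUP t\<in>{0..1}. \<bar>la t - t\<bar>) (SUP t\<in>{0..1}. norm (x (la t) - y t)))"

definition skorokhod_continuous :: "((real \<Rightarrow> 'a::real_normed_vector) \<Rightarrow> real) \<Rightarrow> bool" where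
  "skorokhod_continuous f \<longleftrightarrow> (\<forall>x. cadlag x \<longrightarrow> (\<forall>e>0. \<exists>\<delta>>0. \<forall>y. cadlag y \<longrightarrow>
       skorokhod_dist x y < \<delta> \<longrightarrow> \<bar>f y - f x\<bar> < e))"

definition weak_conv_D ::
  "'w measure \<Rightarrow> (nat \<Rightarrow> 'w \<Rightarrow> real \<Rightarrow> 'a::{real_normed_vector}) \<Rightarrow> 'b measure \<Rightarrow> ('b \<Rightarrow> real \<Rightarrow> 'a) \<Rightarrow> bool" where
  "weak_conv_D M S N W \<longleftrightarrow> (\<forall>f. (\<exists>B. \<forall>x. \<bar>f x\<bar> \<le> B) \<and> skorokhod_continuous f \<longrightarrow>
      (\<lambda>n. \<integral>\<omega>. f (S n \<omega>) \<partial>M) \<longlonglongrightarrow> (\<integral>\<omega>. f (W \<omega>) \<partial>N))"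

definition hilbert_BM :: "'b measure \<Rightarrow> ('b \<Rightarrow> real \<Rightarrow> 'a::real_inner) \<Rightarrow> ('a \<Rightarrow> 'a) \<Rightarrow> bool" where
  "hilbert_BM N W C \<longleftrightarrow> prob_space N \<and>
     (\<forall>t\<in>{0..1}. (\<lambda>\<omega>. W \<omega> t) \<in> borel_measurable N) \<and>
     (\<forall>\<omega>\<in>space N. continuous_on {0..1} (W \<omega>) \<and> W \<omega> 0 = 0) \<and>
     (\<forall>ts hs. length ts = length hs \<longrightarrow> set ts \<subseteq> {0..1} \<longrightarrow>
        real_gaussian N (\<lambda>\<omega>. \<Sum>j<length ts. inner (W \<omega> (ts!j)) (hs!j)) 0
          (\<Sum>j<length ts. \<Sum>l<length ts. min (ts!j) (ts!l) * inner (C (hs!j)) (hs!l)))"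

definition strictly_stationary :: "'w measure \<Rightarrow> (int \<Rightarrow> 'w \<Rightarrow> 'a::topological_space) \<Rightarrow> bool" where
  "strictly_stationary M e \<longleftrightarrow> (\<forall>I s. finite I \<longrightarrow>
     distr M (PiM I (\<lambda>_. borel)) (\<lambda>\<omega>. \<lambda>i\<in>I. e (i + s) \<omega>) =
     distr M (PiM I (\<lambda>_. borel)) (\<lambda>\<omega>. \<lambda>i\<in>I. e i \<omega>))"

text \<open>Y n = o_P(a n): for every e > 0, P(|Y n| > e a n) \<rightarrow> 0 (measurability assumed separately).\<close>
definition o_P :: "'w measure \<Rightarrow> (nat \<Rightarrow> 'w \<Rightarrow> real) \<Rightarrow> (nat \<Rightarrow> real) \<Rightarrow> bool" where
  "o_P M Y a \<longleftrightarrow> (\<forall>e>0. (\<lambda>n. measure M {\<omega>\<in>space M. \<bar>Y n \<omega>\<bar> > e * a n}) \<longlonglongrightarrow> 0)"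

definition diverges_in_prob :: "'w measure \<Rightarrow> (nat \<Rightarrow> 'w \<Rightarrow> real) \<Rightarrow> bool" where
  "diverges_in_prob M T \<longleftrightarrow> (\<forall>B. (\<lambda>n. measure M {\<omega>\<in>space M. T n \<omega> > B}) \<longlonglongrightarrow> 1)"

definition piecewise_continuous_on01 :: "(real \<Rightarrow> real) \<Rightarrow> bool" where
  "piecewise_continuous_on01 g \<longleftrightarrow> (\<exists>\<I>. finite \<I> \<and> \<Union>\<I> = {0..1} \<and>
     (\<forall>I\<in>\<I>. is_interval I \<and> (\<exists>x\<in>I. \<exists>y\<in>I. x < y) \<and> continuous_on I g))"

definition bounded_variation_on :: "(real \<Rightarrow> real) \<Rightarrow> real \<Rightarrow> real \<Rightarrow> bool" where
  "bounded_variation_on f a b \<longleftrightarrow> (\<exists>B. \<forall>xs. sorted xs \<longrightarrow> set xs \<subseteq> {a..b} \<longrightarrow>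
     (\<Sum>j<length xs - 1. \<bar>f (xs!(Suc j)) - f (xs!j)\<bar>) \<le> B)"

definition holder_on :: "real \<Rightarrow> real set \<Rightarrow> (real \<Rightarrow> real) \<Rightarrow> bool" where
  "holder_on \<alpha> S f \<longleftrightarrow> (\<exists>L. \<forall>x\<in>S. \<forall>y\<in>S. \<bar>f x - f y\<bar> \<le> L * \<bar>x - y\<bar> powr \<alpha>)"

text \<open>Autocovariance operator C_r h = E[(eps_0 \<otimes> eps_r) h] = E[<eps_0,h> eps_r].\<close>
definition cov_op :: "'w measure \<Rightarrow> (int \<Rightarrow> 'w \<Rightarrow> 'a::{real_inner,banach,second_countable_topology}) \<Rightarrow> int \<Rightarrow> 'a \<Rightarrow> 'a" where
  "cov_op M e r h = (\<integral>\<omega>. inner (e 0 \<omega>) h *\<^sub>R e r \<omega> \<partial>M)"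

definition lrv_op :: "'w measure \<Rightarrow> (int \<Rightarrow> 'w \<Rightarrow> 'a::{real_inner,banach,second_countable_topology}) \<Rightarrow> 'a \<Rightarrow> 'a" where
  "lrv_op M e h = (\<Sum>\<^sub>\<infinity>r. cov_op M e r h)"

definition real_cov :: "'w measure \<Rightarrow> ('w \<Rightarrow> real) \<Rightarrow> ('w \<Rightarrow> real) \<Rightarrow> real" where
  "real_cov M Y Z = (\<integral>\<omega>. Y \<omega> * Z \<omega> \<partial>M) - (\<integral>\<omega>. Y \<omega> \<partial>M) * (\<integral>\<omega>. Z \<omega> \<partial>M)"

text \<open>The statistic T_{n,PC}(h; C-hat) (the square root of the displayed T^2).\<close>
definition T_PC :: "(real \<Rightarrow> real) \<Rightarrow> nat \<Rightarrow> (nat \<Rightarrow> nat \<Rightarrow> real) \<Rightarrow> (nat \<Rightarrow> real) \<Rightarrow> nat \<Rightarrow> real" where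
  "T_PC h d eta lam n = sqrt (Max ((\<lambda>k. \<Sum>p=1..d. (1 / lam p) * (1 / real n) *
      (\<Sum>i=1..n. h ((real i - real k) / real n) * (eta i p - (\<Sum>j=1..n. eta j p) / real n))\<^sup>2) ` {1..<n}))"

end

theory Submission
  imports Defs
begin

lemma step_has_integral:
  fixes \<psi> :: "real \<Rightarrow> real" and n :: nat
  assumes n: "n > 0"
  shows "m \<le> n \<Longrightarrow> ((\<lambda>x. \<psi> (of_int \<lceil>real n * x\<rceil> / real n)) has_integral
            (\<Sum>i=1..m. \<psi> (real i / real n)) / real n) {0..real m / real n}"
proof (induction m)
  case 0
  then show ?case by (simp add: has_integral_refl)
next
  case (Suc m)
  let ?f = "\<lambda>x. \<psi> (of_int \<lceil>real n * x\<rceil> / real n)"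
  have IH: "(?f has_integral (\<Sum>i=1..m. \<psi> (real i / real n)) / real n) {0..real m / real n}"
    using Suc by simp
  have c: "((\<lambda>x. \<psi> (real (Suc m) / real n)) has_integral (\<psi> (real (Suc m) / real n) * (real (Suc m) / real n - real m / real n))) {real m / real n..real (Suc m) / real n}"
    using has_integral_const_real[of "\<psi> (real (Suc m) / real n)" "real m / real n" "real (Suc m) / real n"]
    by (simp add: divide_right_mono mult.commute)
  have c2: "(?f has_integral (\<psi> (real (Suc m) / real n) * (real (Suc m) / real n - real m / real n))) {real m / real n..real (Suc m) / real n}"
  proof (rule has_integral_spike_finite[OF _ _ c, of "{real m / real n}"])
    fix x assume x: "x \<in> {real m / real n..real (Suc m) / real n} - {real m / real n}"
    have "real m < real n * x" "real n * x \<le> real (Suc m)"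
      using x n by (auto simp: field_simps)
    then have "\<lceil>real n * x\<rceil> = int (Suc m)"
      by (subst ceiling_eq_iff) auto
    then show "?f x = \<psi> (real (Suc m) / real n)" by simp
  qed auto
  have "(?f has_integral ((\<Sum>i=1..m. \<psi> (real i / real n)) / real n + \<psi> (real (Suc m) / real n) * (real (Suc m) / real n - real m / real n))) {0..real (Suc m) / real n}"
    by (rule has_integral_combine[OF _ _ IH c2]) (auto simp: divide_right_mono)
  moreover have "(\<Sum>i=1..m. \<psi> (real i / real n)) / real n + \<psi> (real (Suc m) / real n) * (real (Suc m) / real n - real m / real n)
     = (\<Sum>i=1..Suc m. \<psi> (real i / real n)) / real n"
    using n by (simp add: field_simps)
  ultimately show ?case by simp
qed

lemma riemann_sum_conv:
  fixes \<psi> :: "real \<Rightarrow> real"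
  assumes bnd: "\<And>x. x \<in> {0..1} \<Longrightarrow> \<bar>\<psi> x\<bar> \<le> M"
    and fin: "finite E" and cont: "\<And>x. x \<in> {0<..<1} \<Longrightarrow> x \<notin> E \<Longrightarrow> isCont \<psi> x"
  shows "\<psi> integrable_on {0..1}"
    "(\<lambda>n. (\<Sum>i=1..n. \<psi> (real i / real n)) / real n) \<longlonglongrightarrow> integral {0..1} \<psi>"
proof -
  define S where "S = {0<..<1} - E"
  define f where "f k x = (if x \<in> S then \<psi> (of_int \<lceil>real (Suc k) * x\<rceil> / real (Suc k)) else \<psi> x)" for k x
  have hi: "(f k has_integral (\<Sum>i=1..Suc k. \<psi> (real i / real (Suc k))) / real (Suc k)) {0..1}" for k
  proof -
    have "((\<lambda>x. \<psi> (of_int \<lceil>real (Suc k) * x\<rceil> / real (Suc k))) has_integral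
            (\<Sum>i=1..Suc k. \<psi> (real i / real (Suc k))) / real (Suc k)) {0..real (Suc k) / real (Suc k)}"
      by (rule step_has_integral) auto
    then have st: "((\<lambda>x. \<psi> (of_int \<lceil>real (Suc k) * x\<rceil> / real (Suc k))) has_integral
            (\<Sum>i=1..Suc k. \<psi> (real i / real (Suc k))) / real (Suc k)) {0..1}"
      by simp
    show ?thesis
      by (rule has_integral_spike_finite[OF _ _ st, of "{0,1} \<union> E"]) (auto simp: f_def S_def fin split: if_splits)
  qed
  have le: "norm (f k x) \<le> M" if "x \<in> {0..1}" for k x
  proof (cases "x \<in> S")
    case True
    then have "0 < x" "x < 1" by (auto simp: S_def)
    have a: "real (Suc k) * x \<le> of_int \<lceil>real (Suc k) * x\<rceil>" by (rule le_of_int_ceiling)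
    have b: "of_int \<lceil>real (Suc k) * x\<rceil> \<le> real (Suc k)"
    proof -
      have "real (Suc k) * x \<le> real (Suc k)" using \<open>x<1\<close> by (simp add: mult_left_le)
      then show ?thesis by (metis ceiling_mono ceiling_of_nat of_int_of_nat_eq of_int_le_iff)
    qed
    have "0 \<le> of_int \<lceil>real (Suc k) * x\<rceil> / real (Suc k)"
    proof -
      have "0 < real (Suc k) * x" using \<open>0 < x\<close> by simp
      then have "0 \<le> (of_int \<lceil>real (Suc k) * x\<rceil> :: real)" using a by linarith
      then show ?thesis by simp
    qed
    moreover have "of_int \<lceil>real (Suc k) * x\<rceil> / real (Suc k) \<le> 1"
      using b by simp
    ultimately show ?thesis using True bnd by (simp add: f_def)
  next
    case False then show ?thesis using bnd that by (simp add: f_def)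
  qed
  have conv: "(\<lambda>k. f k x) \<longlonglongrightarrow> \<psi> x" if "x \<in> {0..1}" for x
  proof (cases "x \<in> S")
    case True
    then have x: "x \<in> {0<..<1}" "x \<notin> E" by (auto simp: S_def)
    have u: "(\<lambda>k. of_int \<lceil>real (Suc k) * x\<rceil> / real (Suc k)) \<longlonglongrightarrow> x"
    proof (rule tendsto_sandwich[of "\<lambda>k. x" _ _ "\<lambda>k. x + 1 / real (Suc k)"])
      show "\<forall>\<^sub>F k in sequentially. x \<le> of_int \<lceil>real (Suc k) * x\<rceil> / real (Suc k)"
        by (intro always_eventually allI) (simp add: field_simps le_of_int_ceiling)
      show "\<forall>\<^sub>F k in sequentially. of_int \<lceil>real (Suc k) * x\<rceil> / real (Suc k) \<le> x + 1 / real (Suc k)"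
      proof (intro always_eventually allI)
        fix k
        have "(of_int \<lceil>real (Suc k) * x\<rceil> :: real) \<le> real (Suc k) * x + 1"
          using ceiling_correct[of "real (Suc k) * x"] by linarith
        then have "of_int \<lceil>real (Suc k) * x\<rceil> / real (Suc k) \<le> (real (Suc k) * x + 1) / real (Suc k)"
          by (simp add: divide_right_mono)
        also have "\<dots> = x + 1 / real (Suc k)" by (simp add: field_simps)
        finally show "of_int \<lceil>real (Suc k) * x\<rceil> / real (Suc k) \<le> x + 1 / real (Suc k)" .
      qed
      have "(\<lambda>k. 1 / real (Suc k)) \<longlonglongrightarrow> 0" by (rule LIMSEQ_Suc[OF lim_const_over_n])
      then show "(\<lambda>k. x + 1 / real (Suc k)) \<longlonglongrightarrow> x" using tendsto_add[of "\<lambda>k. x" x] by fastforce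
    qed auto
    have "(\<lambda>k. \<psi> (of_int \<lceil>real (Suc k) * x\<rceil> / real (Suc k))) \<longlonglongrightarrow> \<psi> x"
      by (rule isCont_tendsto_compose[OF cont[OF x] u])
    then show ?thesis using True by (simp add: f_def)
  next
    case False then show ?thesis by (simp add: f_def)
  qed
  have dc: "\<psi> integrable_on {0..1}" "(\<lambda>k. integral {0..1} (f k)) \<longlonglongrightarrow> integral {0..1} \<psi>"
    using dominated_convergence[of f "{0..1}" "\<lambda>x. M" \<psi>] hi le conv
    by (auto intro: has_integral_integrable integrable_const_ivl)
  then show "\<psi> integrable_on {0..1}" by simp
  have "(\<lambda>k. (\<Sum>i=1..Suc k. \<psi> (real i / real (Suc k))) / real (Suc k)) \<longlonglongrightarrow> integral {0..1} \<psi>"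
  proof -
    have "(\<lambda>k. integral {0..1} (f k)) = (\<lambda>k. (\<Sum>i=1..Suc k. \<psi> (real i / real (Suc k))) / real (Suc k))"
      by (rule ext, rule integral_unique[OF hi])
    then show ?thesis using dc(2) by (simp only:)
  qed
  then show "(\<lambda>n. (\<Sum>i=1..n. \<psi> (real i / real n)) / real n) \<longlonglongrightarrow> integral {0..1} \<psi>"
    by (rule LIMSEQ_imp_Suc)
qed

lemma holder_ext:
  fixes h :: "real \<Rightarrow> real"
  assumes h_zero: "\<And>x. x \<in> {-1..0} \<Longrightarrow> h x = 0" and hol: "holder_on \<alpha> {0..1} h" and ap: "\<alpha> > 0"
  shows "\<exists>L\<ge>0. \<forall>x\<in>{-1..1}. \<forall>y\<in>{-1..1}. \<bar>h x - h y\<bar> \<le> L * \<bar>x - y\<bar> powr \<alpha>"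
proof -
  obtain L where L: "\<And>x y. x \<in> {0..1} \<Longrightarrow> y \<in> {0..1} \<Longrightarrow> \<bar>h x - h y\<bar> \<le> L * \<bar>x - y\<bar> powr \<alpha>"
    using hol unfolding holder_on_def by blast
  have "\<bar>h 1 - h 0\<bar> \<le> L * \<bar>1 - 0\<bar> powr \<alpha>" by (rule L) auto
  then have L0: "L \<ge> 0" by simp
  have mono: "L * \<bar>u\<bar> powr \<alpha> \<le> L * \<bar>v\<bar> powr \<alpha>" if "\<bar>u\<bar> \<le> \<bar>v\<bar>" for u v :: real
    using that L0 ap by (intro mult_left_mono powr_mono2) auto
  have main: "\<bar>h x - h y\<bar> \<le> L * \<bar>x - y\<bar> powr \<alpha>" if x: "x \<in> {-1..1}" and y: "y \<in> {-1..1}" for x y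
  proof (cases "x \<le> 0")
    case xn: True
    show ?thesis
    proof (cases "y \<le> 0")
      case True then show ?thesis using xn x y h_zero L0 by simp
    next
      case False
      have "\<bar>h x - h y\<bar> = \<bar>h 0 - h y\<bar>" using xn x h_zero by simp
      also have "\<dots> \<le> L * \<bar>0 - y\<bar> powr \<alpha>" using False y by (intro L) auto
      also have "\<dots> \<le> L * \<bar>x - y\<bar> powr \<alpha>" using False xn by (intro mono) auto
      finally show ?thesis .
    qed
  next
    case xp: False
    show ?thesis
    proof (cases "y \<le> 0")
      case True
      have "\<bar>h x - h y\<bar> = \<bar>h x - h 0\<bar>" using True y h_zero by simp
      also have "\<dots> \<le> L * \<bar>x - 0\<bar> powr \<alpha>" using xp x by (intro L) auto
      also have "\<dots> \<le> L * \<bar>x - y\<bar> powr \<alpha>" using True xp by (intro mono) auto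
      finally show ?thesis .
    next
      case False then show ?thesis using xp x y by (intro L) auto
    qed
  qed
  show ?thesis using L0 main by blast
qed

lemma holder_isCont:
  fixes h :: "real \<Rightarrow> real"
  assumes L: "\<forall>x\<in>{-1..1}. \<forall>y\<in>{-1..1}. \<bar>h x - h y\<bar> \<le> L * \<bar>x - y\<bar> powr \<alpha>" and ap: "\<alpha> > 0"
    and y: "y \<in> {-1<..<1}"
  shows "isCont h y"
proof -
  have ev: "\<forall>\<^sub>F z in at y. z \<in> {-1<..<1}"
    using y by (intro eventually_at_in_open') auto
  have "((\<lambda>z. h z - h y) \<longlongrightarrow> 0) (at y)"
  proof (rule Lim_null_comparison)
    show "\<forall>\<^sub>F z in at y. norm (h z - h y) \<le> L * \<bar>z - y\<bar> powr \<alpha>"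
      using ev by eventually_elim (use L y in auto)
    have "((\<lambda>z. z - y) \<longlongrightarrow> y - y) (at y)"
      by (intro tendsto_intros)
    then have "((\<lambda>z. z - y) \<longlongrightarrow> 0) (at y)" by simp
    then have "((\<lambda>z. \<bar>z - y\<bar>) \<longlongrightarrow> 0) (at y)" by (rule tendsto_rabs_zero)
    then have "((\<lambda>z. \<bar>z - y\<bar> powr \<alpha>) \<longlongrightarrow> 0) (at y)"
      using ap by (intro tendsto_zero_powrI) auto
    then show "((\<lambda>z. L * \<bar>z - y\<bar> powr \<alpha>) \<longlongrightarrow> 0) (at y)"
      by (rule tendsto_mult_right_zero)
  qed
  then have "(h \<longlongrightarrow> h y) (at y)" by (rule LIM_zero_cancel)
  then show ?thesis by (simp add: isCont_def)
qed

lemma bv_facts: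
  fixes h :: "real \<Rightarrow> real"
  assumes bv: "bounded_variation_on h (-1) 1" and h0: "h (-1) = 0"
  shows "\<exists>V\<ge>0. (\<forall>x\<in>{-1..1}. \<bar>h x\<bar> \<le> V) \<and>
     (\<forall>xs. sorted xs \<longrightarrow> set xs \<subseteq> {-1..1} \<longrightarrow> (\<Sum>j<length xs - 1. \<bar>h (xs!(Suc j)) - h (xs!j)\<bar>) \<le> V)"
proof -
  obtain V where V: "\<And>xs. sorted xs \<Longrightarrow> set xs \<subseteq> {-1..1} \<Longrightarrow> (\<Sum>j<length xs - 1. \<bar>h (xs!(Suc j)) - h (xs!j)\<bar>) \<le> V"
    using bv unfolding bounded_variation_on_def by blast
  have "V \<ge> 0" using V[of "[]"] by simp
  moreover have "\<bar>h x\<bar> \<le> V" if "x \<in> {-1..1}" for x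
    using V[of "[-1, x]"] that h0 by simp
  ultimately show ?thesis using V by blast
qed

lemma g_cont:
  fixes g :: "real \<Rightarrow> real"
  assumes "piecewise_continuous_on01 g"
  shows "\<exists>E. finite E \<and> (\<forall>x\<in>{0<..<1} - E. isCont g x)"
proof -
  obtain \<I> where fin: "finite \<I>" and U: "\<Union>\<I> = {0..1}"
    and I: "\<And>I. I \<in> \<I> \<Longrightarrow> is_interval I \<and> continuous_on I g"
    using assms unfolding piecewise_continuous_on01_def by blast
  define E where "E = Inf ` \<I> \<union> Sup ` \<I>"
  have "finite E" using fin by (simp add: E_def)
  moreover have "isCont g x" if x: "x \<in> {0<..<1} - E" for x
  proof -
    have "x \<in> \<Union>\<I>" using x U by auto
    then obtain I where I1: "I \<in> \<I>" "x \<in> I" by blast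
    have sub: "I \<subseteq> {0..1}" using U I1 by auto
    have bb: "bdd_below I" "bdd_above I" using sub by (meson bdd_below_Icc bdd_below_mono, meson bdd_above_Icc bdd_above_mono)
    have "Inf I \<le> x" "x \<le> Sup I" using bb I1 by (auto intro: cInf_lower cSup_upper)
    moreover have "Inf I \<noteq> x" "Sup I \<noteq> x" using x I1 by (auto simp: E_def)
    ultimately have "Inf I < x" "x < Sup I" by auto
    moreover have "I \<noteq> {}" using I1 by auto
    ultimately have "\<exists>a\<in>I. a < x" "\<exists>b\<in>I. x < b"
      using bb cInf_less_iff[of I x] less_cSup_iff[of I x] by simp_all
    then obtain a b where ab: "a \<in> I" "a < x" "b \<in> I" "x < b" by blast
    have iv: "\<And>u v y. u \<in> I \<Longrightarrow> v \<in> I \<Longrightarrow> u \<le> y \<Longrightarrow> y \<le> v \<Longrightarrow> y \<in> I"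
      using I[OF I1(1)] unfolding is_interval_1 by blast
    have "{a<..<b} \<subseteq> I"
    proof
      fix y assume "y \<in> {a<..<b}"
      then show "y \<in> I" using iv[OF ab(1) ab(3), of y] by simp
    qed
    then have "x \<in> interior I" using ab by (meson greaterThanLessThan_iff interiorI open_greaterThanLessThan)
    then show ?thesis using I[OF I1(1)] continuous_on_interior by blast
  qed
  ultimately show ?thesis by blast
qed

lemma riem_bound:
  fixes \<psi> :: "real \<Rightarrow> real"
  assumes "\<And>x. x \<in> {0..1} \<Longrightarrow> \<bar>\<psi> x\<bar> \<le> M" and n: "n > 0"
  shows "\<bar>(\<Sum>i=1..n. \<psi> (real i / real n)) / real n\<bar> \<le> M"
proof -
  have "\<bar>\<Sum>i=1..n. \<psi> (real i / real n)\<bar> \<le> (\<Sum>i=1..n. \<bar>\<psi> (real i / real n)\<bar>)" by (rule sum_abs)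
  also have "\<dots> \<le> (\<Sum>i=1..n. M)"
    by (intro sum_mono assms) (auto simp: field_simps)
  also have "\<dots> = real n * M" by simp
  finally show ?thesis using n by (simp add: field_simps abs_divide)
qed

lemma riem_int_bound:
  fixes \<psi> :: "real \<Rightarrow> real"
  assumes "\<And>x. x \<in> {0..1} \<Longrightarrow> \<bar>\<psi> x\<bar> \<le> M"
    and lim: "(\<lambda>n. (\<Sum>i=1..n. \<psi> (real i / real n)) / real n) \<longlonglongrightarrow> I"
  shows "\<bar>I\<bar> \<le> M"
proof -
  have "\<forall>\<^sub>F n in sequentially. norm ((\<Sum>i=1..n. \<psi> (real i / real n)) / real n) \<le> M"
    using eventually_gt_at_top[of 0] by eventually_elim (use riem_bound[OF assms(1)] in auto)
  then show ?thesis using Lim_norm_ubound[OF _ lim] by auto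
qed

lemma shift_bound:
  fixes h \<phi> :: "real \<Rightarrow> real"
  assumes L: "\<forall>x\<in>{-1..1}. \<forall>y\<in>{-1..1}. \<bar>h x - h y\<bar> \<le> L * \<bar>x - y\<bar> powr \<alpha>" and ap: "\<alpha> > 0"
    and phi: "\<And>x. x \<in> {0..1} \<Longrightarrow> \<bar>\<phi> x\<bar> \<le> Mp"
    and k: "1 \<le> k" "k < n" and t: "t \<in> {0..1}" and kt: "\<bar>real k / real n - t\<bar> \<le> 1 / real n"
  shows "\<bar>(\<Sum>i=1..n. h ((real i - real k) / real n) * \<phi> (real i / real n)) / real n
          - (\<Sum>i=1..n. h (real i / real n - t) * \<phi> (real i / real n)) / real n\<bar>
         \<le> L * (1 / real n) powr \<alpha> * Mp"
proof -
  have n: "n > 0" using k by simp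
  have Mp: "0 \<le> Mp" using phi[of 0] by simp
  have L0: "0 \<le> L" using L[rule_format, of 1 0] by simp
  have trm: "\<bar>h ((real i - real k) / real n) * \<phi> (real i / real n) - h (real i / real n - t) * \<phi> (real i / real n)\<bar>
        \<le> L * (1 / real n) powr \<alpha> * Mp" if i: "i \<in> {1..n}" for i
  proof -
    have a1: "(real i - real k) / real n \<in> {-1..1}" using i k n by (auto simp: field_simps)
    have "real i / real n \<le> 1" "0 \<le> real i / real n" using i n by auto
    moreover have "0 \<le> t" "t \<le> 1" using t by auto
    ultimately have a2: "real i / real n - t \<in> {-1..1}" by (simp only: atLeastAtMost_iff) linarith
    have "(real i - real k) / real n - (real i / real n - t) = t - real k / real n"
      using n by (simp add: diff_divide_distrib)
    then have "\<bar>(real i - real k) / real n - (real i / real n - t)\<bar> = \<bar>real k / real n - t\<bar>"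
      by simp
    then have d: "\<bar>(real i - real k) / real n - (real i / real n - t)\<bar> \<le> 1 / real n" using kt by simp
    have "\<bar>h ((real i - real k) / real n) - h (real i / real n - t)\<bar> \<le> L * (1 / real n) powr \<alpha>"
    proof -
      have "\<bar>h ((real i - real k) / real n) - h (real i / real n - t)\<bar> \<le> L * \<bar>(real i - real k) / real n - (real i / real n - t)\<bar> powr \<alpha>"
        using L a1 a2 by blast
      also have "\<dots> \<le> L * (1 / real n) powr \<alpha>"
        using d ap L0 by (intro mult_left_mono powr_mono2) auto
      finally show ?thesis .
    qed
    moreover have "\<bar>\<phi> (real i / real n)\<bar> \<le> Mp" using i n by (intro phi) (auto simp: field_simps)
    ultimately have "\<bar>h ((real i - real k) / real n) - h (real i / real n - t)\<bar> * \<bar>\<phi> (real i / real n)\<bar> \<le> L * (1 / real n) powr \<alpha> * Mp"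
      by (intro mult_mono) auto
    then show ?thesis by (simp add: abs_mult left_diff_distrib[symmetric])
  qed
  have "\<bar>(\<Sum>i=1..n. h ((real i - real k) / real n) * \<phi> (real i / real n)) - (\<Sum>i=1..n. h (real i / real n - t) * \<phi> (real i / real n))\<bar>
     = \<bar>\<Sum>i=1..n. h ((real i - real k) / real n) * \<phi> (real i / real n) - h (real i / real n - t) * \<phi> (real i / real n)\<bar>"
    by (simp add: sum_subtractf)
  also have "\<dots> \<le> (\<Sum>i=1..n. \<bar>h ((real i - real k) / real n) * \<phi> (real i / real n) - h (real i / real n - t) * \<phi> (real i / real n)\<bar>)"
    by (rule sum_abs)
  also have "\<dots> \<le> (\<Sum>i=1..n. L * (1 / real n) powr \<alpha> * Mp)"
    by (intro sum_mono trm)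
  also have "\<dots> = real n * (L * (1 / real n) powr \<alpha> * Mp)" by simp
  finally have "\<bar>(\<Sum>i=1..n. h ((real i - real k) / real n) * \<phi> (real i / real n)) - (\<Sum>i=1..n. h (real i / real n - t) * \<phi> (real i / real n))\<bar>
     \<le> real n * (L * (1 / real n) powr \<alpha> * Mp)" .
  then show ?thesis using n by (simp add: diff_divide_distrib[symmetric] abs_divide field_simps)
qed

lemma det_main:
  fixes g h :: "real \<Rightarrow> real"
  assumes g_bdd: "bounded (g ` {0..1})" and g_pc: "piecewise_continuous_on01 g"
    and h_zero: "\<And>x. x \<in> {-1..0} \<Longrightarrow> h x = 0" and h_bv: "bounded_variation_on h (-1) 1"
    and ap: "\<alpha> > 0" and h_holder: "holder_on \<alpha> {0..1} h"
    and hg: "(SUP t\<in>{0..1}. \<bar>integral {0..1} (\<lambda>x. h (x - t) * g x)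
               - integral {0..1} g * integral {0..1} (\<lambda>x. h (x - t))\<bar>) > 0"
  shows "\<exists>\<kappa>>0. \<exists>kk. \<forall>\<^sub>F n in sequentially. 1 \<le> kk n \<and> kk n < n \<and>
     \<kappa> * real n \<le> \<bar>\<Sum>i=1..n. h ((real i - real (kk n)) / real n) *
        (g (real i / real n) - (\<Sum>j=1..n. g (real j / real n)) / real n)\<bar>"
proof -
  obtain L where L0: "L \<ge> 0" and L: "\<forall>x\<in>{-1..1}. \<forall>y\<in>{-1..1}. \<bar>h x - h y\<bar> \<le> L * \<bar>x - y\<bar> powr \<alpha>"
    using holder_ext[OF h_zero h_holder ap] by blast
  have hm1: "h (-1) = 0" using h_zero by simp
  obtain V where V0: "V \<ge> 0" and V: "\<And>x. x \<in> {-1..1} \<Longrightarrow> \<bar>h x\<bar> \<le> V"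
    using bv_facts[OF h_bv hm1] by blast
  obtain Mg where "\<forall>y\<in>g ` {0..1}. norm y \<le> Mg"
    using g_bdd unfolding bounded_iff by blast
  then have Mg: "\<And>x. x \<in> {0..1} \<Longrightarrow> \<bar>g x\<bar> \<le> Mg" by auto
  have Mg0: "Mg \<ge> 0" using Mg[of 0] by simp
  obtain E where E: "finite E" "\<And>x. x \<in> {0<..<1} - E \<Longrightarrow> isCont g x"
    using g_cont[OF g_pc] by blast
  have hc: "isCont (\<lambda>x. h (x - t)) x" if t: "t \<in> {0..1}" and x: "x \<in> {0<..<1}" for t x
  proof -
    have hc1: "isCont h (x - t)" using t x by (intro holder_isCont[OF L ap]) auto
    have hc2: "isCont (\<lambda>x. x - t) x" by simp
    show ?thesis using isCont_o2[OF hc2 hc1] by simp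
  qed
  have hb: "\<bar>h (x - t)\<bar> \<le> V" if "t \<in> {0..1}" "x \<in> {0..1}" for t x using that by (intro V) auto
  have hgb: "\<bar>h (x - t) * g x\<bar> \<le> V * Mg" if "t \<in> {0..1}" "x \<in> {0..1}" for t x
    using hb[OF that] Mg[OF that(2)] V0 by (simp add: abs_mult mult_mono')
  have RA: "(\<lambda>n. (\<Sum>i=1..n. h (real i / real n - t) * g (real i / real n)) / real n)
       \<longlonglongrightarrow> integral {0..1} (\<lambda>x. h (x - t) * g x)" if t: "t \<in> {0..1}" for t
    using riemann_sum_conv(2)[of "\<lambda>x. h (x - t) * g x" "V * Mg" E] hgb[OF t] E hc[OF t]
    by (auto intro: isCont_mult)
  have RC: "(\<lambda>n. (\<Sum>i=1..n. h (real i / real n - t)) / real n)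
       \<longlonglongrightarrow> integral {0..1} (\<lambda>x. h (x - t))" if t: "t \<in> {0..1}" for t
    using riemann_sum_conv(2)[of "\<lambda>x. h (x - t)" V "{}"] hb[OF t] hc[OF t] by auto
  have RB: "(\<lambda>n. (\<Sum>i=1..n. g (real i / real n)) / real n) \<longlonglongrightarrow> integral {0..1} g"
    using riemann_sum_conv(2)[of g Mg E] Mg E by auto
  define G where "G t = integral {0..1} (\<lambda>x. h (x - t) * g x) - integral {0..1} g * integral {0..1} (\<lambda>x. h (x - t))" for t
  have Gb: "\<bar>G t\<bar> \<le> V * Mg + Mg * V" if t: "t \<in> {0..1}" for t
  proof -
    have a: "\<bar>integral {0..1} (\<lambda>x. h (x - t) * g x)\<bar> \<le> V * Mg"
      by (rule riem_int_bound[OF _ RA[OF t]]) (use hgb[OF t] in auto)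
    have b: "\<bar>integral {0..1} g\<bar> \<le> Mg" by (rule riem_int_bound[OF _ RB]) (use Mg in auto)
    have c: "\<bar>integral {0..1} (\<lambda>x. h (x - t))\<bar> \<le> V" by (rule riem_int_bound[OF _ RC[OF t]]) (use hb[OF t] in auto)
    have "\<bar>integral {0..1} g * integral {0..1} (\<lambda>x. h (x - t))\<bar> \<le> Mg * V"
      using b c by (simp add: abs_mult mult_mono')
    moreover have "V * Mg = Mg * V" by simp
    ultimately show ?thesis using a abs_triangle_ineq4[of "integral {0..1} (\<lambda>x. h (x - t) * g x)" "integral {0..1} g * integral {0..1} (\<lambda>x. h (x - t))"]
      unfolding G_def by linarith
  qed
  have "bdd_above ((\<lambda>t. \<bar>G t\<bar>) ` {0..1})" using Gb by (intro bdd_aboveI2) auto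
  then obtain t where t: "t \<in> {0..1}" and Gt: "0 < \<bar>G t\<bar>"
    using hg less_cSUP_iff[of "{0..1}" "\<lambda>t. \<bar>G t\<bar>" 0] by (auto simp: G_def)
  have "t \<noteq> 1"
  proof
    assume t1: "t = 1"
    have z1: "integral {0..1} (\<lambda>x. h (x - 1) * g x) = 0"
      by (subst integral_cong[where g="\<lambda>x. 0"]) (auto intro: h_zero)
    have z2: "integral {0..1} (\<lambda>x. h (x - 1)) = 0"
      by (subst integral_cong[where g="\<lambda>x. 0"]) (auto intro: h_zero)
    show False using Gt t1 z1 z2 by (simp add: G_def)
  qed
  with t have t1: "t < 1" "0 \<le> t" by auto
  define kk where "kk n = max 1 (nat \<lfloor>t * real n\<rfloor>)" for n
  have kt: "\<bar>real (kk n) / real n - t\<bar> \<le> 1 / real n" if n: "n > 0" for n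
  proof (cases "\<lfloor>t * real n\<rfloor> \<ge> 1")
    case True
    then have z: "1 \<le> nat \<lfloor>t * real n\<rfloor>" by linarith
    then have "kk n = nat \<lfloor>t * real n\<rfloor>" unfolding kk_def by (rule max_absorb2)
    moreover have "real (nat \<lfloor>t * real n\<rfloor>) = of_int \<lfloor>t * real n\<rfloor>" using True by simp
    ultimately have "real (kk n) = of_int \<lfloor>t * real n\<rfloor>" by simp
    then have "t * real n - 1 < real (kk n)" "real (kk n) \<le> t * real n" by linarith+
    then have i1: "(t * real n - 1) / real n < real (kk n) / real n"
      using n by (simp add: divide_strict_right_mono)
    have "real (kk n) / real n \<le> t" using n \<open>real (kk n) \<le> t * real n\<close> by (simp add: pos_divide_le_eq)
    moreover have "(t * real n - 1) / real n = t - 1 / real n" using n by (simp add: field_simps)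
    ultimately have "t - 1 / real n < real (kk n) / real n" "real (kk n) / real n \<le> t" using i1 by simp_all
    then show ?thesis by (simp add: abs_if)
  next
    case False
    then have "kk n = 1" by (simp add: kk_def)
    have "t * real n < 1" using False by linarith
    then have "t < 1 / real n" using n by (simp add: field_simps)
    then show ?thesis using \<open>kk n = 1\<close> t1 by (simp add: abs_if)
  qed
  have k1: "1 \<le> kk n" for n by (simp add: kk_def)
  obtain N where N: "real N * (1 - t) \<ge> 2" "N \<ge> 2"
  proof -
    obtain N0 :: nat where "2 / (1 - t) \<le> real N0" using real_arch_simple by blast
    then have "real (N0 + 2) * (1 - t) \<ge> 2" using t1 by (simp add: field_simps)
    then show ?thesis using that[of "N0 + 2"] by simp
  qed
  have kn: "kk n < n" if "n \<ge> N" for n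
  proof -
    have "real n * (1 - t) \<ge> 2" using N that t1 by (smt (verit) mult_right_mono of_nat_mono)
    then have tn: "t * real n \<le> real n - 2" by (simp add: algebra_simps)
    have "real (nat \<lfloor>t * real n\<rfloor>) \<le> t * real n" using t1 by simp
    then have "real (kk n) < real n" using tn N that by (simp add: kk_def)
    then show ?thesis by simp
  qed
  define sA where "sA n = (\<Sum>i=1..n. h ((real i - real (kk n)) / real n) * g (real i / real n)) / real n" for n
  define sH where "sH n = (\<Sum>i=1..n. h ((real i - real (kk n)) / real n) * 1) / real n" for n
  define sG where "sG n = (\<Sum>i=1..n. g (real i / real n)) / real n" for n
  have pz: "(\<lambda>n. L * (1 / real n) powr \<alpha> * M) \<longlonglongrightarrow> 0" for M
  proof -
    have "(\<lambda>n. (1 / real n) powr \<alpha>) \<longlonglongrightarrow> 0"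
      using ap by (intro tendsto_zero_powrI lim_const_over_n) auto
    then show ?thesis by (intro tendsto_mult_right_zero tendsto_mult_left_zero)
  qed
  have evN: "\<forall>\<^sub>F n in sequentially. n \<ge> N" by (rule eventually_ge_at_top)
  have A: "sA \<longlonglongrightarrow> integral {0..1} (\<lambda>x. h (x - t) * g x)"
  proof -
    have "(\<lambda>n. sA n - (\<Sum>i=1..n. h (real i / real n - t) * g (real i / real n)) / real n) \<longlonglongrightarrow> 0"
    proof (rule Lim_null_comparison[OF _ pz[of Mg]])
      show "\<forall>\<^sub>F n in sequentially. norm (sA n - (\<Sum>i=1..n. h (real i / real n - t) * g (real i / real n)) / real n) \<le> L * (1 / real n) powr \<alpha> * Mg"
        using evN
      proof eventually_elim
        case (elim n)
        then have n0: "n > 0" using N by simp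
        show ?case using shift_bound[OF L ap Mg k1[of n] kn[OF elim] t kt[OF n0]] by (simp add: sA_def)
      qed
    qed
    from tendsto_add[OF this RA[OF t]] show ?thesis by simp
  qed
  have H: "sH \<longlonglongrightarrow> integral {0..1} (\<lambda>x. h (x - t))"
  proof -
    have "(\<lambda>n. sH n - (\<Sum>i=1..n. h (real i / real n - t) * 1) / real n) \<longlonglongrightarrow> 0"
    proof (rule Lim_null_comparison[OF _ pz[of 1]])
      show "\<forall>\<^sub>F n in sequentially. norm (sH n - (\<Sum>i=1..n. h (real i / real n - t) * 1) / real n) \<le> L * (1 / real n) powr \<alpha> * 1"
        using evN
      proof eventually_elim
        case (elim n)
        then have n0: "n > 0" using N by simp
        show ?case using shift_bound[OF L ap _ k1[of n] kn[OF elim] t kt[OF n0], of "\<lambda>x. 1" 1] by (simp add: sH_def)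
      qed
    qed
    from tendsto_add[OF this RC[OF t]] show ?thesis by simp
  qed
  have conv: "(\<lambda>n. sA n - sG n * sH n) \<longlonglongrightarrow> G t"
    unfolding G_def using A H RB by (intro tendsto_intros) (auto simp: sG_def)
  have "\<forall>\<^sub>F n in sequentially. dist (sA n - sG n * sH n) (G t) < \<bar>G t\<bar> / 2"
    using conv Gt by (intro tendstoD) auto
  then have ev: "\<forall>\<^sub>F n in sequentially. \<bar>G t\<bar> / 2 \<le> \<bar>sA n - sG n * sH n\<bar>"
  proof eventually_elim
    case (elim n)
    then have "\<bar>sA n - sG n * sH n - G t\<bar> < \<bar>G t\<bar> / 2" by (simp add: dist_real_def)
    moreover have "\<bar>G t\<bar> \<le> \<bar>sA n - sG n * sH n - G t\<bar> + \<bar>sA n - sG n * sH n\<bar>"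
      using abs_triangle_ineq4[of "sA n - sG n * sH n" "G t"] abs_minus_commute[of "sA n - sG n * sH n" "G t"]
      by (smt (verit))
    ultimately show ?case by linarith
  qed
  define a where "a n = (\<Sum>i=1..n. h ((real i - real (kk n)) / real n) *
        (g (real i / real n) - (\<Sum>j=1..n. g (real j / real n)) / real n))" for n
  have aeq: "a n / real n = sA n - sG n * sH n" if "n > 0" for n
  proof -
    have "a n = (\<Sum>i=1..n. h ((real i - real (kk n)) / real n) * g (real i / real n))
        - (\<Sum>j=1..n. g (real j / real n)) / real n * (\<Sum>i=1..n. h ((real i - real (kk n)) / real n))"
      by (simp add: a_def right_diff_distrib sum_subtractf sum_distrib_left mult.commute)
    then show ?thesis using that by (simp add: sA_def sG_def sH_def field_simps)
  qed
  have "\<forall>\<^sub>F n in sequentially. 1 \<le> kk n \<and> kk n < n \<and> \<bar>G t\<bar> / 2 * real n \<le> \<bar>a n\<bar>"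
    using ev evN eventually_gt_at_top[of 0]
  proof eventually_elim
    case (elim n)
    then have "\<bar>G t\<bar> / 2 \<le> \<bar>a n / real n\<bar>" using aeq by simp
    then have "\<bar>G t\<bar> / 2 * real n \<le> \<bar>a n\<bar>" using elim by (simp add: field_simps abs_divide)
    then show ?case using k1 kn elim by simp
  qed
  then show ?thesis using Gt unfolding a_def by (intro exI[of _ "\<bar>G t\<bar> / 2"]) auto
qed

definition supK :: "real \<Rightarrow> (real \<Rightarrow> 'a::real_normed_vector) \<Rightarrow> real" where
  "supK K x = (SUP t\<in>{0..1}. min K (norm (x t)))"

definition fK :: "real \<Rightarrow> (real \<Rightarrow> 'a::real_normed_vector) \<Rightarrow> real" where
  "fK K x = max 0 (supK K x - K + 1)"

lemma supK_upper: "t \<in> {0..1} \<Longrightarrow> min K (norm (x t)) \<le> supK K x"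
  unfolding supK_def by (rule cSUP_upper) (auto intro: bdd_aboveI2[where M=K])

lemma supK_least: "(\<And>t. t \<in> {0..1} \<Longrightarrow> min K (norm (x t)) \<le> c) \<Longrightarrow> supK K x \<le> c"
  unfolding supK_def by (rule cSUP_least) auto

lemma supK_bounds: "0 \<le> K \<Longrightarrow> 0 \<le> supK K x \<and> supK K x \<le> K"
proof -
  assume K: "0 \<le> K"
  have "min K (norm (x 0)) \<le> supK K x" by (rule supK_upper) auto
  moreover have "0 \<le> min K (norm (x 0))" using K by simp
  moreover have "supK K x \<le> K" by (rule supK_least) auto
  ultimately show ?thesis by linarith
qed

lemma fK_bounds: "0 \<le> K \<Longrightarrow> 0 \<le> fK K x \<and> fK K x \<le> 1"
  using supK_bounds[of K x] unfolding fK_def by auto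

lemma cadlag_bounded:
  fixes x :: "real \<Rightarrow> 'a::real_normed_vector"
  assumes cx: "cadlag x"
  shows "\<exists>B. \<forall>t\<in>{0..1}. norm (x t) \<le> B"
proof -
  have R: "\<exists>br>t. \<forall>s\<in>{0..1}. t < s \<and> s < br \<longrightarrow> norm (x s) \<le> norm (x t) + 1" if t: "t \<in> {0..1}" for t
  proof (cases "t < 1")
    case True
    then have "(x \<longlongrightarrow> x t) (at_right t)" using cx t unfolding cadlag_def by auto
    then have "\<forall>\<^sub>F s in at_right t. dist (x s) (x t) < 1" by (rule tendstoD) simp
    then obtain br where br: "br > t" "\<And>s. s > t \<Longrightarrow> s < br \<Longrightarrow> dist (x s) (x t) < 1"
      unfolding eventually_at_right_field by blast
    have "norm (x s) \<le> norm (x t) + 1" if "t < s" "s < br" for s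
    proof -
      have "norm (x s) - norm (x t) \<le> norm (x s - x t)" by (rule norm_triangle_ineq2)
      then show ?thesis using br(2)[OF that] by (simp add: dist_norm)
    qed
    then show ?thesis using br(1) by blast
  next
    case False
    then show ?thesis using t by (intro exI[of _ 2]) auto
  qed
  have Lf: "\<exists>bl<t. \<exists>c. \<forall>s\<in>{0..1}. bl < s \<and> s < t \<longrightarrow> norm (x s) \<le> c" if t: "t \<in> {0..1}" for t
  proof (cases "t > 0")
    case True
    have "t \<in> {0<..1}" using t True by auto
    then obtain l where "(x \<longlongrightarrow> l) (at_left t)" using cx unfolding cadlag_def by blast
    then have "\<forall>\<^sub>F s in at_left t. dist (x s) l < 1" by (rule tendstoD) simp
    then obtain bl where bl: "bl < t" "\<And>s. s > bl \<Longrightarrow> s < t \<Longrightarrow> dist (x s) l < 1"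
      unfolding eventually_at_left_field by blast
    have "norm (x s) \<le> norm l + 1" if "bl < s" "s < t" for s
    proof -
      have "norm (x s) - norm l \<le> norm (x s - l)" by (rule norm_triangle_ineq2)
      then show ?thesis using bl(2)[OF that] by (simp add: dist_norm)
    qed
    then show ?thesis using bl(1) by blast
  next
    case False
    then show ?thesis using t by (intro exI[of _ "-1"]) auto
  qed
  have loc: "\<exists>d>0. \<exists>b. \<forall>s\<in>{0..1}. dist s t < d \<longrightarrow> norm (x s) \<le> b" if t: "t \<in> {0..1}" for t
  proof -
    obtain br where br: "br > t" "\<And>s. s \<in> {0..1} \<Longrightarrow> t < s \<Longrightarrow> s < br \<Longrightarrow> norm (x s) \<le> norm (x t) + 1"
      using R[OF t] by blast
    obtain bl c where bl: "bl < t" "\<And>s. s \<in> {0..1} \<Longrightarrow> bl < s \<Longrightarrow> s < t \<Longrightarrow> norm (x s) \<le> c"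
      using Lf[OF t] by blast
    have "\<forall>s\<in>{0..1}. dist s t < min (t - bl) (br - t) \<longrightarrow> norm (x s) \<le> max (norm (x t) + 1) c"
    proof (intro ballI impI)
      fix s assume s: "s \<in> {0..1}" "dist s t < min (t - bl) (br - t)"
      then have s2: "bl < s" "s < br" by (auto simp: dist_real_def)
      consider "s = t" | "t < s" | "s < t" by linarith
      then show "norm (x s) \<le> max (norm (x t) + 1) c"
      proof cases
        case 1 then show ?thesis by simp
      next
        case 2 then show ?thesis using br(2)[OF s(1) 2 s2(2)] by simp
      next
        case 3 then show ?thesis using bl(2)[OF s(1) s2(1) 3] by simp
      qed
    qed
    moreover have "min (t - bl) (br - t) > 0" using br bl by simp
    ultimately show ?thesis by blast
  qed
  obtain d b where db: "\<And>t. t \<in> {0..1} \<Longrightarrow> d t > 0 \<and> (\<forall>s\<in>{0..1}. dist s t < d t \<longrightarrow> norm (x s) \<le> b t)"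
    using loc by metis
  obtain C where C: "C \<subseteq> {0..1}" "finite C" "{0..1} \<subseteq> (\<Union>t\<in>C. ball t (d t))"
  proof (rule compactE_image[of "{0..1::real}" "{0..1}" "\<lambda>t. ball t (d t)"])
    show "{0..1::real} \<subseteq> (\<Union>t\<in>{0..1}. ball t (d t))" using db by force
  qed auto
  have "norm (x s) \<le> (\<Sum>t\<in>C. \<bar>b t\<bar>)" if s: "s \<in> {0..1}" for s
  proof -
    obtain t where t: "t \<in> C" "s \<in> ball t (d t)" using C(3) s by blast
    then have "norm (x s) \<le> b t" using db[of t] C(1) s by (auto simp: dist_commute)
    also have "\<dots> \<le> \<bar>b t\<bar>" by simp
    also have "\<dots> \<le> (\<Sum>t\<in>C. \<bar>b t\<bar>)" using t(1) C(2) by (intro member_le_sum) auto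
    finally show ?thesis .
  qed
  then show ?thesis by blast
qed

lemma time_change_range:
  assumes la: "time_change la" and t: "t \<in> {0..1}"
  shows "la t \<in> {0..1}"
proof -
  have sm: "strict_mono_on {0..1} la" using la unfolding time_change_def by simp
  have "la 0 \<le> la t" "la t \<le> la 1"
    by (rule strict_mono_on_leD[OF sm], use t in auto)+
  then show ?thesis using la unfolding time_change_def by simp
qed

lemma time_change_onto:
  assumes la: "time_change la" and s: "s \<in> {0..1}"
  shows "\<exists>t\<in>{0..1}. la t = s"
proof -
  have "\<exists>t. 0 \<le> t \<and> t \<le> 1 \<and> la t = s"
    using la s unfolding time_change_def by (intro IVT') auto
  then show ?thesis by auto
qed

lemma min_norm_diff: "min K (norm (u::'a::real_normed_vector)) \<le> min K (norm v) + norm (u - v)"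
proof -
  have "norm u - norm v \<le> norm (u - v)" by (rule norm_triangle_ineq2)
  moreover have "0 \<le> norm (u - v)" by simp
  ultimately show ?thesis unfolding min_def by (smt (verit))
qed

lemma fK_skorokhod: "skorokhod_continuous (fK K :: (real \<Rightarrow> 'a::real_normed_vector) \<Rightarrow> real)"
  unfolding skorokhod_continuous_def
proof (intro allI impI)
  fix x :: "real \<Rightarrow> 'a" and e :: real
  assume cx: "cadlag x" and e: "0 < e"
  show "\<exists>\<delta>>0. \<forall>y. cadlag y \<longrightarrow> skorokhod_dist x y < \<delta> \<longrightarrow> \<bar>fK K y - fK K x\<bar> < e"
  proof (intro exI[of _ e] conjI allI impI e)
    fix y :: "real \<Rightarrow> 'a"
    assume cy: "cadlag y" and d: "skorokhod_dist x y < e"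
    obtain Bx where Bx: "\<And>t. t \<in> {0..1} \<Longrightarrow> norm (x t) \<le> Bx" using cadlag_bounded[OF cx] by blast
    obtain By where By: "\<And>t. t \<in> {0..1} \<Longrightarrow> norm (y t) \<le> By" using cadlag_bounded[OF cy] by blast
    define A where "A la = (SUP t\<in>{0..1}. \<bar>la t - t\<bar>)" for la :: "real \<Rightarrow> real"
    define B where "B la = (SUP t\<in>{0..1}. norm (x (la t) - y t))" for la
    have Anonneg: "0 \<le> A la" if la: "time_change la" for la
    proof -
      have "\<bar>la 0 - 0\<bar> \<le> A la" unfolding A_def
      proof (rule cSUP_upper)
        show "bdd_above ((\<lambda>t. \<bar>la t - t\<bar>) ` {0..1})"
        proof (rule bdd_aboveI2[where M=2])
          fix t :: real assume "t \<in> {0..1}"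
          then show "\<bar>la t - t\<bar> \<le> 2" using time_change_range[OF la, of t] by auto
        qed
      qed auto
      then show ?thesis by simp
    qed
    have tc_id: "time_change (\<lambda>t. t)" unfolding time_change_def by (auto simp: strict_mono_on_def)
    have "skorokhod_dist x y = Inf ((\<lambda>la. max (A la) (B la)) ` {la. time_change la})"
      unfolding skorokhod_dist_def A_def B_def by simp
    moreover have "(\<lambda>la. max (A la) (B la)) ` {la. time_change la} \<noteq> {}" using tc_id by auto
    moreover have "bdd_below ((\<lambda>la. max (A la) (B la)) ` {la. time_change la})"
    proof (rule bdd_belowI2[where m=0])
      fix la assume "la \<in> {la. time_change la}"
      then show "0 \<le> max (A la) (B la)" using Anonneg by (simp add: le_max_iff_disj)
    qed
    ultimately have "\<exists>z\<in>(\<lambda>la. max (A la) (B la)) ` {la. time_change la}. z < e"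
      using d cInf_less_iff by metis
    then have "\<exists>la\<in>{la. time_change la}. max (A la) (B la) < e" by blast
    then obtain la where la: "time_change la" and Bla: "B la < e" by auto
    have bddB: "bdd_above ((\<lambda>t. norm (x (la t) - y t)) ` {0..1})"
    proof (rule bdd_aboveI2[where M="Bx + By"])
      fix t :: real assume t: "t \<in> {0..1}"
      have "norm (x (la t) - y t) \<le> norm (x (la t)) + norm (y t)" by (rule norm_triangle_ineq4)
      then show "norm (x (la t) - y t) \<le> Bx + By" using Bx[OF time_change_range[OF la t]] By[OF t] by simp
    qed
    have pt: "norm (x (la t) - y t) \<le> B la" if "t \<in> {0..1}" for t
      unfolding B_def using bddB that by (rule cSUP_upper2) simp
    have s1: "supK K y \<le> supK K x + B la"
    proof (rule supK_least)
      fix t :: real assume t: "t \<in> {0..1}"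
      have "min K (norm (y t)) \<le> min K (norm (x (la t))) + norm (y t - x (la t))" by (rule min_norm_diff)
      also have "\<dots> \<le> supK K x + B la"
        using supK_upper[OF time_change_range[OF la t], of K x] pt[OF t] by (simp add: norm_minus_commute)
      finally show "min K (norm (y t)) \<le> supK K x + B la" .
    qed
    have s2: "supK K x \<le> supK K y + B la"
    proof (rule supK_least)
      fix s :: real assume s: "s \<in> {0..1}"
      obtain t where t: "t \<in> {0..1}" "la t = s" using time_change_onto[OF la s] by blast
      have "min K (norm (x s)) \<le> min K (norm (y t)) + norm (x (la t) - y t)"
        using min_norm_diff[of K "x (la t)" "y t"] t(2) by simp
      also have "\<dots> \<le> supK K y + B la" using supK_upper[OF t(1), of K y] pt[OF t(1)] by simp
      finally show "min K (norm (x s)) \<le> supK K y + B la" .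
    qed
    have "\<bar>supK K y - supK K x\<bar> < e" using s1 s2 Bla by linarith
    then show "\<bar>fK K y - fK K x\<bar> < e" unfolding fK_def by (simp add: max_def abs_if split: if_splits) linarith?
  qed
qed

lemma sup_rat01:
  fixes \<phi> :: "real \<Rightarrow> real"
  assumes cont: "continuous_on {0..1} \<phi>" and bnd: "\<And>t. t \<in> {0..1} \<Longrightarrow> \<phi> t \<le> K"
  shows "(SUP t\<in>{0..1}. \<phi> t) = (SUP t\<in>\<rat> \<inter> {0..1}. \<phi> t)"
proof -
  define Q where "Q = \<rat> \<inter> {0..1::real}"
  have Q0: "0 \<in> Q" by (simp add: Q_def)
  have QS: "Q \<subseteq> {0..1}" by (auto simp: Q_def)
  have cl: "{0..1} \<subseteq> closure Q"
  proof
    fix t :: real assume t: "t \<in> {0..1}"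
    show "t \<in> closure Q" unfolding closure_approachable
    proof (intro allI impI)
      fix e :: real assume e: "e > 0"
      show "\<exists>y\<in>Q. dist y t < e"
      proof (cases "t > 0")
        case True
        obtain q where q: "q \<in> \<rat>" "max 0 (t - e) < q" "q < t"
          using Rats_dense_in_real[of "max 0 (t - e)" t] True e by auto
        then have "q \<in> Q" "dist q t < e" using t by (auto simp: Q_def dist_real_def)
        then show ?thesis by blast
      next
        case False
        then have "t = 0" using t by simp
        then show ?thesis using Q0 e by (intro bexI[of _ 0]) auto
      qed
    qed
  qed
  have clQ: "closure Q \<subseteq> {0..1}" using QS by (simp add: closure_minimal)
  have bQ: "bdd_above (\<phi> ` Q)" using bnd QS by (intro bdd_aboveI2[where M=K]) auto
  have b01: "bdd_above (\<phi> ` {0..1})" using bnd by (intro bdd_aboveI2[where M=K]) auto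
  have le1: "(SUP t\<in>{0..1}. \<phi> t) \<le> (SUP t\<in>Q. \<phi> t)"
  proof (rule cSUP_least)
    fix t :: real assume t: "t \<in> {0..1}"
    have "\<phi> ` closure Q \<subseteq> {..(SUP t\<in>Q. \<phi> t)}"
    proof (rule image_closure_subset)
      show "continuous_on (closure Q) \<phi>" using cont clQ by (rule continuous_on_subset)
      show "\<phi> ` Q \<subseteq> {..(SUP t\<in>Q. \<phi> t)}" using bQ by (auto intro: cSUP_upper)
    qed auto
    moreover have "\<phi> t \<in> \<phi> ` closure Q" using cl t by auto
    ultimately show "\<phi> t \<le> (SUP t\<in>Q. \<phi> t)" by auto
  qed auto
  have le2: "(SUP t\<in>Q. \<phi> t) \<le> (SUP t\<in>{0..1}. \<phi> t)"
    using Q0 b01 QS by (intro cSUP_subset_mono) auto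
  show ?thesis using le1 le2 by (simp add: Q_def)
qed

lemma tightness:
  fixes M :: "'w measure" and eps :: "int \<Rightarrow> 'w \<Rightarrow> 'a::{real_inner,banach,second_countable_topology}"
    and N :: "'b measure" and W :: "'b \<Rightarrow> real \<Rightarrow> 'a"
  assumes M: "prob_space M" and eps_meas: "\<And>i. eps i \<in> borel_measurable M"
    and W_BM: "hilbert_BM N W C"
    and A2: "weak_conv_D M (\<lambda>n \<omega> t. (1 / sqrt (real n)) *\<^sub>R (\<Sum>i=1..nat \<lfloor>t * real n\<rfloor>. eps (int i) \<omega>)) N W"
    and eta: "\<eta> > 0"
  shows "\<exists>K>0. \<forall>\<^sub>F n in sequentially.
     measure M {\<omega>\<in>space M. \<exists>j\<in>{1..n}. K * sqrt (real n) < norm (\<Sum>i=1..j. eps (int i) \<omega>)} < \<eta>"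
proof -
  interpret N: prob_space N using W_BM unfolding hilbert_BM_def by simp
  interpret M: prob_space M by (rule M)
  have Wm: "\<And>t. t \<in> {0..1} \<Longrightarrow> (\<lambda>\<omega>. W \<omega> t) \<in> borel_measurable N"
    and Wc: "\<And>\<omega>. \<omega> \<in> space N \<Longrightarrow> continuous_on {0..1} (W \<omega>)"
    using W_BM unfolding hilbert_BM_def by auto
  have fKW_meas: "(\<lambda>\<omega>. fK (real m) (W \<omega>)) \<in> borel_measurable N" for m :: nat
  proof -
    have eq: "supK (real m) (W \<omega>) = (SUP t\<in>\<rat> \<inter> {0..1}. min (real m) (norm (W \<omega> t)))" if "\<omega> \<in> space N" for \<omega>
      unfolding supK_def
      by (rule sup_rat01[where K="real m"]) (auto intro!: continuous_intros Wc[OF that])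
    have "(\<lambda>\<omega>. SUP t\<in>\<rat> \<inter> {0..1}. min (real m) (norm (W \<omega> t))) \<in> borel_measurable N"
    proof (rule borel_measurable_cSUP)
      show "countable (\<rat> \<inter> {0..1::real})" using countable_rat by (rule countable_subset[rotated]) auto
      fix t :: real assume "t \<in> \<rat> \<inter> {0..1}"
      then have "(\<lambda>\<omega>. W \<omega> t) \<in> borel_measurable N" using Wm by auto
      then show "(\<lambda>\<omega>. min (real m) (norm (W \<omega> t))) \<in> borel_measurable N" by measurable
    next
      fix \<omega> show "bdd_above ((\<lambda>t. min (real m) (norm (W \<omega> t))) ` (\<rat> \<inter> {0..1}))"
        by (intro bdd_aboveI2[where M="real m"]) auto
    qed
    moreover have "(\<lambda>\<omega>. supK (real m) (W \<omega>)) \<in> borel_measurable N \<longleftrightarrow>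
        (\<lambda>\<omega>. SUP t\<in>\<rat> \<inter> {0..1}. min (real m) (norm (W \<omega> t))) \<in> borel_measurable N"
      by (rule measurable_cong) (rule eq)
    ultimately have "(\<lambda>\<omega>. supK (real m) (W \<omega>)) \<in> borel_measurable N" by simp
    then show ?thesis unfolding fK_def by measurable
  qed
  have limW: "(\<lambda>m. \<integral>\<omega>. fK (real m) (W \<omega>) \<partial>N) \<longlonglongrightarrow> (\<integral>\<omega>. 0 \<partial>N)"
  proof (rule integral_dominated_convergence[where w="\<lambda>_. 1"])
    show "AE \<omega> in N. (\<lambda>m. fK (real m) (W \<omega>)) \<longlonglongrightarrow> 0"
    proof (rule AE_I2)
      fix \<omega> assume \<omega>: "\<omega> \<in> space N"
      have "compact (W \<omega> ` {0..1})" by (intro compact_continuous_image Wc[OF \<omega>]) auto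
      then have "bounded (W \<omega> ` {0..1})" by (rule compact_imp_bounded)
      then obtain b where "\<forall>y\<in>W \<omega> ` {0..1}. norm y \<le> b" unfolding bounded_iff by blast
      then have b: "\<And>t. t \<in> {0..1} \<Longrightarrow> norm (W \<omega> t) \<le> b" by blast
      obtain m0 :: nat where m0: "b + 1 \<le> real m0" using real_arch_simple by blast
      have "fK (real m) (W \<omega>) = 0" if "m \<ge> m0" for m
      proof -
        have "supK (real m) (W \<omega>) \<le> b"
        proof (rule supK_least)
          fix t :: real assume "t \<in> {0..1}"
          then have "norm (W \<omega> t) \<le> b" by (rule b)
          then show "min (real m) (norm (W \<omega> t)) \<le> b" by (simp add: min_le_iff_disj)
        qed
        moreover have "b + 1 \<le> real m" using m0 that by linarith
        ultimately show ?thesis unfolding fK_def by simp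
      qed
      then have "\<forall>\<^sub>F m in sequentially. fK (real m) (W \<omega>) = 0" by (auto simp: eventually_sequentially)
      then show "(\<lambda>m. fK (real m) (W \<omega>)) \<longlonglongrightarrow> 0" by (rule tendsto_eventually)
    qed
    show "AE \<omega> in N. norm (fK (real m) (W \<omega>)) \<le> 1" for m
    proof (rule AE_I2)
      fix \<omega> show "norm (fK (real m) (W \<omega>)) \<le> 1" using fK_bounds[of "real m" "W \<omega>"] by simp
    qed
    show "(\<lambda>\<omega>. 0::real) \<in> borel_measurable N" by simp
    show "(\<lambda>\<omega>. fK (real m) (W \<omega>)) \<in> borel_measurable N" for m by (rule fKW_meas)
    show "integrable N (\<lambda>\<omega>. 1::real)" by simp
  qed
  then have "\<forall>\<^sub>F m in sequentially. (\<integral>\<omega>. fK (real m) (W \<omega>) \<partial>N) < \<eta>"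
    using eta by (intro order_tendstoD) auto
  then obtain M0 where M0: "\<And>m. m \<ge> M0 \<Longrightarrow> (\<integral>\<omega>. fK (real m) (W \<omega>) \<partial>N) < \<eta>"
    unfolding eventually_sequentially by blast
  define m where "m = max 1 M0"
  have m1: "m \<ge> 1" and mI: "(\<integral>\<omega>. fK (real m) (W \<omega>) \<partial>N) < \<eta>"
    using M0[of m] by (auto simp: m_def)
  define P where "P n \<omega> t = (1 / sqrt (real n)) *\<^sub>R (\<Sum>i=1..nat \<lfloor>t * real n\<rfloor>. eps (int i) \<omega>)" for n \<omega> t
  have "(\<lambda>n. \<integral>\<omega>. fK (real m) (P n \<omega>) \<partial>M) \<longlonglongrightarrow> (\<integral>\<omega>. fK (real m) (W \<omega>) \<partial>N)"
  proof -
    have bf: "\<exists>B. \<forall>x::real \<Rightarrow> 'a. \<bar>fK (real m) x\<bar> \<le> B"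
    proof (intro exI[of _ 1] allI)
      fix x :: "real \<Rightarrow> 'a"
      show "\<bar>fK (real m) x\<bar> \<le> 1" using fK_bounds[of "real m" x] by simp
    qed
    show ?thesis using A2[unfolded weak_conv_D_def, rule_format, OF conjI[OF bf fK_skorokhod]]
      unfolding P_def .
  qed
  then have evI: "\<forall>\<^sub>F n in sequentially. (\<integral>\<omega>. fK (real m) (P n \<omega>) \<partial>M) < \<eta>"
    using mI by (intro order_tendstoD) auto
  have bound: "measure M {\<omega>\<in>space M. \<exists>j\<in>{1..n}. real m * sqrt (real n) < norm (\<Sum>i=1..j. eps (int i) \<omega>)}
      \<le> (\<integral>\<omega>. fK (real m) (P n \<omega>) \<partial>M)" if n: "n \<ge> 1" for n
  proof -
    define Bad where "Bad = {\<omega>\<in>space M. \<exists>j\<in>{1..n}. real m * sqrt (real n) < norm (\<Sum>i=1..j. eps (int i) \<omega>)}"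
    have Bad_sets: "Bad \<in> sets M" unfolding Bad_def by measurable (use eps_meas in auto)
    define J where "J = (\<lambda>t. nat \<lfloor>t * real n\<rfloor>) ` {0..1::real}"
    have J: "J \<subseteq> {0..n}"
    proof
      fix j assume "j \<in> J"
      then obtain t :: real where t: "t \<in> {0..1}" "j = nat \<lfloor>t * real n\<rfloor>" by (auto simp: J_def)
      have "t * real n \<le> real n" using t by (simp add: mult_left_le_one_le)
      then have "\<lfloor>t * real n\<rfloor> \<le> int n" by linarith
      then show "j \<in> {0..n}" using t by auto
    qed
    have supeq: "supK (real m) (P n \<omega>) = (SUP j\<in>J. min (real m) (norm ((1 / sqrt (real n)) *\<^sub>R (\<Sum>i=1..j. eps (int i) \<omega>))))" for \<omega>
      unfolding supK_def P_def J_def by (simp add: image_image)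
    have meas: "(\<lambda>\<omega>. fK (real m) (P n \<omega>)) \<in> borel_measurable M"
    proof -
      have "(\<lambda>\<omega>. SUP j\<in>J. min (real m) (norm ((1 / sqrt (real n)) *\<^sub>R (\<Sum>i=1..j. eps (int i) \<omega>)))) \<in> borel_measurable M"
      proof (rule borel_measurable_cSUP)
        show "countable J" using J by (intro countable_finite) (auto intro: finite_subset)
        fix j
        show "(\<lambda>\<omega>. min (real m) (norm ((1 / sqrt (real n)) *\<^sub>R (\<Sum>i=1..j. eps (int i) \<omega>)))) \<in> borel_measurable M"
          using eps_meas by measurable
      next
        fix \<omega> show "bdd_above ((\<lambda>j. min (real m) (norm ((1 / sqrt (real n)) *\<^sub>R (\<Sum>i=1..j. eps (int i) \<omega>)))) ` J)"
          by (intro bdd_aboveI2[where M="real m"]) auto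
      qed
      then have "(\<lambda>\<omega>. supK (real m) (P n \<omega>)) \<in> borel_measurable M" by (simp only: supeq)
      then show ?thesis unfolding fK_def by measurable
    qed
    have int: "integrable M (\<lambda>\<omega>. fK (real m) (P n \<omega>))"
    proof (rule M.integrable_const_bound[where B=1])
      show "AE x in M. norm (fK (real m) (P n x)) \<le> 1"
      proof (rule AE_I2)
        fix x show "norm (fK (real m) (P n x)) \<le> 1" using fK_bounds[of "real m" "P n x"] by simp
      qed
    qed (rule meas)
    have ind: "indicator Bad \<omega> \<le> fK (real m) (P n \<omega>)" if "\<omega> \<in> space M" for \<omega>
    proof (cases "\<omega> \<in> Bad")
      case True
      then obtain j where j: "j \<in> {1..n}" "real m * sqrt (real n) < norm (\<Sum>i=1..j. eps (int i) \<omega>)"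
        unfolding Bad_def by blast
      define t where "t = real j / real n"
      have t01: "t \<in> {0..1}" using j n by (auto simp: t_def)
      have "t * real n = real j" using n by (simp add: t_def)
      then have Pj: "P n \<omega> t = (1 / sqrt (real n)) *\<^sub>R (\<Sum>i=1..j. eps (int i) \<omega>)" by (simp add: P_def)
      have sn: "sqrt (real n) > 0" using n by simp
      have "real m < norm (\<Sum>i=1..j. eps (int i) \<omega>) / sqrt (real n)"
        using j(2) sn by (simp add: field_simps)
      then have "real m < norm (P n \<omega> t)" using sn by (simp add: Pj divide_inverse mult.commute)
      then have "real m \<le> supK (real m) (P n \<omega>)" using supK_upper[OF t01, of "real m" "P n \<omega>"] by simp
      then have "fK (real m) (P n \<omega>) = 1" using supK_bounds[of "real m" "P n \<omega>"] unfolding fK_def by simp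
      then show ?thesis using True by simp
    next
      case False then show ?thesis using fK_bounds[of "real m" "P n \<omega>"] by simp
    qed
    have "measure M Bad = (\<integral>\<omega>. indicator Bad \<omega> \<partial>M)" using Bad_sets by (simp add: Int_absorb2 sets.sets_into_space)
    also have "\<dots> \<le> (\<integral>\<omega>. fK (real m) (P n \<omega>) \<partial>M)"
      using Bad_sets int ind by (intro integral_mono) (auto intro: M.integrable_const_bound[where B=1])
    finally show ?thesis unfolding Bad_def .
  qed
  have "\<forall>\<^sub>F n in sequentially.
     measure M {\<omega>\<in>space M. \<exists>j\<in>{1..n}. real m * sqrt (real n) < norm (\<Sum>i=1..j. eps (int i) \<omega>)} < \<eta>"
    using evI eventually_ge_at_top[of 1] by eventually_elim (use bound in force)
  then show ?thesis using m1 by (intro exI[of _ "real m"]) auto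
qed

lemma sum_by_parts:
  fixes a :: "nat \<Rightarrow> real" and e :: "nat \<Rightarrow> 'a::real_vector"
  shows "(\<Sum>i=1..n. a i *\<^sub>R e i) = a n *\<^sub>R (\<Sum>i=1..n. e i) - (\<Sum>i\<in>{1..<n}. (a (Suc i) - a i) *\<^sub>R (\<Sum>l=1..i. e l))"
proof (induction n)
  case 0 then show ?case by simp
next
  case (Suc n)
  show ?case
  proof (cases "n = 0")
    case True then show ?thesis by simp
  next
    case False
    have s1: "{1..<Suc n} = insert n {1..<n}" using False by auto
    have "(\<Sum>i\<in>{1..<Suc n}. (a (Suc i) - a i) *\<^sub>R (\<Sum>l=1..i. e l))
        = (a (Suc n) - a n) *\<^sub>R (\<Sum>l=1..n. e l) + (\<Sum>i\<in>{1..<n}. (a (Suc i) - a i) *\<^sub>R (\<Sum>l=1..i. e l))"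
      unfolding s1 by (subst sum.insert) auto
    then show ?thesis using Suc.IH by (simp add: algebra_simps)
  qed
qed

lemma noise_bound:
  fixes h :: "real \<Rightarrow> real" and e :: "nat \<Rightarrow> 'a::real_normed_vector"
  assumes hV: "\<And>x. x \<in> {-1..1} \<Longrightarrow> \<bar>h x\<bar> \<le> V"
    and bv: "\<And>xs. sorted xs \<Longrightarrow> set xs \<subseteq> {-1..1} \<Longrightarrow> (\<Sum>j<length xs - 1. \<bar>h (xs!(Suc j)) - h (xs!j)\<bar>) \<le> V"
    and k: "1 \<le> k" "k < n"
    and S: "\<And>j. j \<in> {1..n} \<Longrightarrow> norm (\<Sum>i=1..j. e i) \<le> Kn"
  shows "norm (\<Sum>i=1..n. h ((real i - real k) / real n) *\<^sub>R (e i - (1 / real n) *\<^sub>R (\<Sum>j=1..n. e j))) \<le> 3 * V * Kn"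
proof -
  have n: "n > 0" using k by simp
  define a where "a i = h ((real i - real k) / real n)" for i
  have arg: "(real i - real k) / real n \<in> {-1..1}" if "i \<in> {1..n}" for i
    using that k n by (auto simp: field_simps)
  have V0: "0 \<le> V" using hV[of 0] by simp
  have "1 \<in> {1..n}" using n by simp
  then have "norm (\<Sum>i=1..1. e i) \<le> Kn" by (rule S)
  then have Kn0: "0 \<le> Kn" using norm_ge_zero order_trans by blast
  have aV: "\<bar>a i\<bar> \<le> V" if "i \<in> {1..n}" for i using hV[OF arg[OF that]] by (simp add: a_def)
  define xs where "xs = map (\<lambda>i. (real i - real k) / real n) [1..<n+1]"
  have xs_sorted: "sorted xs"
  proof -
    have "sorted_wrt (\<le>) xs" unfolding xs_def
      by (rule sorted_wrt_map_mono[OF sorted_wrt_upt]) (use n in \<open>auto simp: divide_right_mono\<close>)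
    then show ?thesis by simp
  qed
  have xs_set: "set xs \<subseteq> {-1..1}" unfolding xs_def using arg by auto
  have len: "length xs = n" by (simp add: xs_def)
  have "(\<Sum>j<length xs - 1. \<bar>h (xs!(Suc j)) - h (xs!j)\<bar>) = (\<Sum>j<n - 1. \<bar>a (Suc (Suc j)) - a (Suc j)\<bar>)"
  proof (rule sum.cong)
    fix j assume j: "j \<in> {..<n - 1}"
    then have j1: "Suc j < n" "j < n" using len by auto
    have "xs ! Suc j = (real (Suc (Suc j)) - real k) / real n" "xs ! j = (real (Suc j) - real k) / real n"
      using j1 unfolding xs_def by (simp_all add: nth_map nth_upt del: upt_Suc)
    then show "\<bar>h (xs!(Suc j)) - h (xs!j)\<bar> = \<bar>a (Suc (Suc j)) - a (Suc j)\<bar>" by (simp add: a_def)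
  qed (simp add: len)
  also have "\<dots> = (\<Sum>i\<in>{1..<n}. \<bar>a (Suc i) - a i\<bar>)"
  proof -
    have "{1..<n} = {Suc 0..<Suc (n - 1)}" using n by auto
    then show ?thesis by (simp only: sum.shift_bounds_Suc_ivl lessThan_atLeast0)
  qed
  finally have tv: "(\<Sum>i\<in>{1..<n}. \<bar>a (Suc i) - a i\<bar>) \<le> V" using bv[OF xs_sorted xs_set] by simp
  have p1: "norm (\<Sum>i=1..n. a i *\<^sub>R e i) \<le> 2 * V * Kn"
  proof -
    have "norm (\<Sum>i=1..n. a i *\<^sub>R e i) \<le> norm (a n *\<^sub>R (\<Sum>i=1..n. e i)) + norm (\<Sum>i\<in>{1..<n}. (a (Suc i) - a i) *\<^sub>R (\<Sum>l=1..i. e l))"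
      unfolding sum_by_parts by (rule norm_triangle_ineq4)
    also have "norm (a n *\<^sub>R (\<Sum>i=1..n. e i)) \<le> V * Kn"
      using aV[of n] S[of n] n V0 by (simp add: mult_mono')
    also have "norm (\<Sum>i\<in>{1..<n}. (a (Suc i) - a i) *\<^sub>R (\<Sum>l=1..i. e l)) \<le> (\<Sum>i\<in>{1..<n}. \<bar>a (Suc i) - a i\<bar> * Kn)"
    proof -
      have "norm (\<Sum>i\<in>{1..<n}. (a (Suc i) - a i) *\<^sub>R (\<Sum>l=1..i. e l)) \<le> (\<Sum>i\<in>{1..<n}. norm ((a (Suc i) - a i) *\<^sub>R (\<Sum>l=1..i. e l)))"
        by (rule norm_sum)
      also have "\<dots> \<le> (\<Sum>i\<in>{1..<n}. \<bar>a (Suc i) - a i\<bar> * Kn)"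
        by (intro sum_mono) (use S in \<open>auto intro!: mult_left_mono\<close>)
      finally show ?thesis .
    qed
    also have "(\<Sum>i\<in>{1..<n}. \<bar>a (Suc i) - a i\<bar> * Kn) \<le> V * Kn"
      using tv Kn0 by (simp add: sum_distrib_right[symmetric] mult_right_mono)
    finally show ?thesis by (simp add: mult.commute mult.left_commute)
  qed
  have p2: "norm (\<Sum>i=1..n. a i *\<^sub>R ((1 / real n) *\<^sub>R (\<Sum>j=1..n. e j))) \<le> V * Kn"
  proof -
    have "(\<Sum>i=1..n. a i *\<^sub>R ((1 / real n) *\<^sub>R (\<Sum>j=1..n. e j))) = ((\<Sum>i=1..n. a i) / real n) *\<^sub>R (\<Sum>j=1..n. e j)"
      by (simp add: scaleR_sum_left[symmetric] sum_divide_distrib)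
    then have "norm (\<Sum>i=1..n. a i *\<^sub>R ((1 / real n) *\<^sub>R (\<Sum>j=1..n. e j))) = \<bar>(\<Sum>i=1..n. a i) / real n\<bar> * norm (\<Sum>j=1..n. e j)"
      by simp
    also have "\<dots> \<le> V * Kn"
    proof (rule mult_mono')
      have "\<bar>\<Sum>i=1..n. a i\<bar> \<le> (\<Sum>i=1..n. \<bar>a i\<bar>)" by (rule sum_abs)
      also have "\<dots> \<le> (\<Sum>i=1..n. V)" by (intro sum_mono aV)
      finally show "\<bar>(\<Sum>i=1..n. a i) / real n\<bar> \<le> V" using n by (simp add: abs_divide field_simps)
      show "norm (\<Sum>j=1..n. e j) \<le> Kn" using S[of n] n by simp
    qed auto
    finally show ?thesis .
  qed
  have "(\<Sum>i=1..n. h ((real i - real k) / real n) *\<^sub>R (e i - (1 / real n) *\<^sub>R (\<Sum>j=1..n. e j)))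
      = (\<Sum>i=1..n. a i *\<^sub>R e i) - (\<Sum>i=1..n. a i *\<^sub>R ((1 / real n) *\<^sub>R (\<Sum>j=1..n. e j)))"
    by (simp add: a_def scaleR_diff_right sum_subtractf)
  then have "norm (\<Sum>i=1..n. h ((real i - real k) / real n) *\<^sub>R (e i - (1 / real n) *\<^sub>R (\<Sum>j=1..n. e j)))
      \<le> norm (\<Sum>i=1..n. a i *\<^sub>R e i) + norm (\<Sum>i=1..n. a i *\<^sub>R ((1 / real n) *\<^sub>R (\<Sum>j=1..n. e j)))"
    by (simp add: norm_triangle_ineq4)
  then show ?thesis using p1 p2 by simp
qed

lemma sq_ineq: "(u + w)\<^sup>2 \<ge> u\<^sup>2 / 2 - w\<^sup>2" for u w :: real
proof -
  have "0 \<le> (u + 2 * w)\<^sup>2" by simp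
  then show ?thesis by (simp add: power2_eq_square algebra_simps)
qed

lemma proj_bound:
  fixes Dl :: "'a::real_inner" and v vt :: "nat \<Rightarrow> 'a"
  assumes d: "d \<ge> 1"
    and vnorm: "\<And>p. p \<in> {1..d} \<Longrightarrow> norm (v p) = 1"
    and conv: "\<And>p. p \<in> {1..d} \<Longrightarrow> norm (v p - sgn (inner (v p) (vt p)) *\<^sub>R vt p) \<le> c / (4 * real d)"
    and c: "0 < c" "c \<le> 1" and proj: "c * (norm Dl)\<^sup>2 \<le> (\<Sum>p=1..d. (inner Dl (vt p))\<^sup>2)"
  shows "c / 4 * (norm Dl)\<^sup>2 \<le> (\<Sum>p=1..d. (inner Dl (v p))\<^sup>2)"
proof -
  define \<delta> where "\<delta> = c / (4 * real d)"
  have d1: "real d \<ge> 1" using d by simp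
  have \<delta>0: "0 \<le> \<delta>" using c d1 by (simp add: \<delta>_def)
  have \<delta>1: "\<delta> < 1"
  proof -
    have "\<delta> \<le> c / 4" unfolding \<delta>_def using c d1 by (intro divide_left_mono) auto
    then show ?thesis using c by simp
  qed
  have each: "(inner Dl (v p))\<^sup>2 \<ge> (inner Dl (vt p))\<^sup>2 / 2 - (norm Dl)\<^sup>2 * \<delta>\<^sup>2" if p: "p \<in> {1..d}" for p
  proof -
    define s where "s = sgn (inner (v p) (vt p))"
    define w where "w = v p - s *\<^sub>R vt p"
    have w: "norm w \<le> \<delta>" using conv[OF p] by (simp add: w_def s_def \<delta>_def)
    have "s \<noteq> 0"
    proof
      assume "s = 0"
      then have "norm w = 1" using vnorm[OF p] by (simp add: w_def)
      then show False using w \<delta>1 by simp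
    qed
    then have s2: "s\<^sup>2 = 1" unfolding s_def by (auto simp: sgn_if)
    have "inner Dl (v p) = s * inner Dl (vt p) + inner Dl w"
      by (simp add: w_def inner_diff_right)
    then have "(inner Dl (v p))\<^sup>2 \<ge> (s * inner Dl (vt p))\<^sup>2 / 2 - (inner Dl w)\<^sup>2"
      using sq_ineq by simp
    moreover have "(s * inner Dl (vt p))\<^sup>2 = (inner Dl (vt p))\<^sup>2" using s2 by (simp add: power_mult_distrib)
    moreover have "(inner Dl w)\<^sup>2 \<le> (norm Dl)\<^sup>2 * \<delta>\<^sup>2"
    proof -
      have "\<bar>inner Dl w\<bar> \<le> norm Dl * norm w" by (rule Cauchy_Schwarz_ineq2)
      also have "\<dots> \<le> norm Dl * \<delta>" using w by (simp add: mult_left_mono)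
      finally have "\<bar>inner Dl w\<bar> \<le> norm Dl * \<delta>" .
      then have "\<bar>inner Dl w\<bar>\<^sup>2 \<le> (norm Dl * \<delta>)\<^sup>2" by (rule power_mono) simp
      then show ?thesis by (simp add: power_mult_distrib)
    qed
    ultimately show ?thesis by linarith
  qed
  have "(\<Sum>p=1..d. (inner Dl (v p))\<^sup>2) \<ge> (\<Sum>p=1..d. (inner Dl (vt p))\<^sup>2 / 2 - (norm Dl)\<^sup>2 * \<delta>\<^sup>2)"
    by (intro sum_mono each)
  also have "(\<Sum>p=1..d. (inner Dl (vt p))\<^sup>2 / 2 - (norm Dl)\<^sup>2 * \<delta>\<^sup>2) = (\<Sum>p=1..d. (inner Dl (vt p))\<^sup>2) / 2 - real d * ((norm Dl)\<^sup>2 * \<delta>\<^sup>2)"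
    by (simp add: sum_subtractf sum_divide_distrib)
  finally have A: "(\<Sum>p=1..d. (inner Dl (v p))\<^sup>2) \<ge> c * (norm Dl)\<^sup>2 / 2 - real d * \<delta>\<^sup>2 * (norm Dl)\<^sup>2"
    using proj by (simp add: algebra_simps)
  have "real d * \<delta>\<^sup>2 = c\<^sup>2 / (16 * real d)" using d1 by (simp add: \<delta>_def power2_eq_square field_simps)
  also have "\<dots> \<le> c / 16"
  proof -
    have "c\<^sup>2 \<le> c" using c by (simp add: power2_eq_square mult_left_le_one_le)
    also have "c \<le> c * real d" using c d1 by simp
    finally show ?thesis using d1 by (simp add: field_simps)
  qed
  finally have "real d * \<delta>\<^sup>2 * (norm Dl)\<^sup>2 \<le> c / 16 * (norm Dl)\<^sup>2" by (rule mult_right_mono) simp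
  moreover have "c / 4 * (norm Dl)\<^sup>2 = (c * (norm Dl)\<^sup>2) / 4" "c / 16 * (norm Dl)\<^sup>2 = (c * (norm Dl)\<^sup>2) / 16"
    "c * (norm Dl)\<^sup>2 / 2 = (c * (norm Dl)\<^sup>2) / 2" by simp_all
  moreover have "0 \<le> c * (norm Dl)\<^sup>2" using c by simp
  ultimately show ?thesis using A by linarith
qed

lemma Q_decomp:
  fixes Dl mu vv :: "'a::real_inner" and e :: "nat \<Rightarrow> 'a" and g :: "real \<Rightarrow> real" and hk :: "nat \<Rightarrow> real"
  assumes n: "n > 0"
  shows "(\<Sum>i=1..n. hk i * (inner (mu + g (real i / real n) *\<^sub>R Dl + e i) vv
           - (\<Sum>j=1..n. inner (mu + g (real j / real n) *\<^sub>R Dl + e j) vv) / real n))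
       = (\<Sum>i=1..n. hk i * (g (real i / real n) - (\<Sum>j=1..n. g (real j / real n)) / real n)) * inner Dl vv
         + inner (\<Sum>i=1..n. hk i *\<^sub>R (e i - (1 / real n) *\<^sub>R (\<Sum>j=1..n. e j))) vv"
proof -
  define gb where "gb = (\<Sum>j=1..n. g (real j / real n)) / real n"
  define eb where "eb = (\<Sum>j=1..n. inner (e j) vv) / real n"
  have mean: "(\<Sum>j=1..n. inner (mu + g (real j / real n) *\<^sub>R Dl + e j) vv) / real n
      = inner mu vv + gb * inner Dl vv + eb"
  proof -
    have "(\<Sum>j=1..n. inner (mu + g (real j / real n) *\<^sub>R Dl + e j) vv)
        = (\<Sum>j=1..n. inner mu vv) + (\<Sum>j=1..n. g (real j / real n)) * inner Dl vv + (\<Sum>j=1..n. inner (e j) vv)"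
      by (simp add: inner_add_left sum.distrib sum_distrib_right)
    then show ?thesis using n by (simp add: gb_def eb_def field_simps)
  qed
  have trm: "inner (mu + g (real i / real n) *\<^sub>R Dl + e i) vv - (inner mu vv + gb * inner Dl vv + eb)
      = (g (real i / real n) - gb) * inner Dl vv + (inner (e i) vv - eb)" for i
    by (simp add: inner_add_left algebra_simps)
  have eb2: "inner (e i - (1 / real n) *\<^sub>R (\<Sum>j=1..n. e j)) vv = inner (e i) vv - eb" for i
    by (simp add: inner_diff_left inner_sum_left eb_def)
  have "(\<Sum>i=1..n. hk i * (inner (mu + g (real i / real n) *\<^sub>R Dl + e i) vv
           - (\<Sum>j=1..n. inner (mu + g (real j / real n) *\<^sub>R Dl + e j) vv) / real n))
      = (\<Sum>i=1..n. hk i * ((g (real i / real n) - gb) * inner Dl vv + (inner (e i) vv - eb)))"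
    unfolding mean trm ..
  also have "\<dots> = (\<Sum>i=1..n. hk i * (g (real i / real n) - gb)) * inner Dl vv + (\<Sum>i=1..n. hk i * (inner (e i) vv - eb))"
  proof -
    have "\<And>i. hk i * ((g (real i / real n) - gb) * inner Dl vv + (inner (e i) vv - eb))
        = (hk i * (g (real i / real n) - gb)) * inner Dl vv + hk i * (inner (e i) vv - eb)"
      by (simp add: algebra_simps)
    then show ?thesis by (simp only: sum.distrib sum_distrib_right)
  qed
  also have "(\<Sum>i=1..n. hk i * (inner (e i) vv - eb)) = inner (\<Sum>i=1..n. hk i *\<^sub>R (e i - (1 / real n) *\<^sub>R (\<Sum>j=1..n. e j))) vv"
    by (simp only: inner_sum_left inner_scaleR_left eb2)
  finally show ?thesis by (simp add: gb_def)
qed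

lemma core:
  fixes Dl mu :: "'a::real_inner" and e v vt :: "nat \<Rightarrow> 'a" and lam :: "nat \<Rightarrow> real" and g h :: "real \<Rightarrow> real"
  assumes k: "1 \<le> k" "k < n" and d: "d \<ge> 1"
    and vnorm: "\<And>p. p \<in> {1..d} \<Longrightarrow> norm (v p) = 1"
    and lam: "\<And>p. p \<in> {1..d} \<Longrightarrow> 0 < lam p \<and> lam p \<le> Lc"
    and conv: "\<And>p. p \<in> {1..d} \<Longrightarrow> norm (v p - sgn (inner (v p) (vt p)) *\<^sub>R vt p) \<le> c / (4 * real d)"
    and c: "0 < c" "c \<le> 1" and proj: "c * (norm Dl)\<^sup>2 \<le> (\<Sum>p=1..d. (inner Dl (vt p))\<^sup>2)"
    and hV: "\<And>x. x \<in> {-1..1} \<Longrightarrow> \<bar>h x\<bar> \<le> V"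
    and bv: "\<And>xs. sorted xs \<Longrightarrow> set xs \<subseteq> {-1..1} \<Longrightarrow> (\<Sum>j<length xs - 1. \<bar>h (xs!(Suc j)) - h (xs!j)\<bar>) \<le> V"
    and kap: "0 < \<kappa>" "\<kappa> * real n \<le> \<bar>\<Sum>i=1..n. h ((real i - real k) / real n) *
        (g (real i / real n) - (\<Sum>j=1..n. g (real j / real n)) / real n)\<bar>"
    and S: "\<And>j. j \<in> {1..n} \<Longrightarrow> norm (\<Sum>i=1..j. e i) \<le> Kn"
    and Lc: "Lc \<le> c * \<kappa>\<^sup>2 / (16 * (B\<^sup>2 + 1)) * (real n * (norm Dl)\<^sup>2)"
    and big: "real d * (3 * V * Kn)\<^sup>2 \<le> c * \<kappa>\<^sup>2 / 16 * ((real n)\<^sup>2 * (norm Dl)\<^sup>2)"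
  shows "B < T_PC h d (\<lambda>i p. inner (mu + g (real i / real n) *\<^sub>R Dl + e i) (v p)) lam n"
proof -
  have n: "n > 0" using k by simp
  define \<eta> where "\<eta> i p = inner (mu + g (real i / real n) *\<^sub>R Dl + e i) (v p)" for i p
  define hk where "hk i = h ((real i - real k) / real n)" for i
  define a where "a = (\<Sum>i=1..n. hk i * (g (real i / real n) - (\<Sum>j=1..n. g (real j / real n)) / real n))"
  define E where "E = (\<Sum>i=1..n. hk i *\<^sub>R (e i - (1 / real n) *\<^sub>R (\<Sum>j=1..n. e j)))"
  define Q where "Q p = (\<Sum>i=1..n. hk i * (\<eta> i p - (\<Sum>j=1..n. \<eta> j p) / real n))" for p
  have Qeq: "Q p = a * inner Dl (v p) + inner E (v p)" for p
    unfolding Q_def \<eta>_def a_def E_def by (rule Q_decomp[OF n])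
  have Enorm: "norm E \<le> 3 * V * Kn" unfolding E_def hk_def by (rule noise_bound[OF hV bv k S])
  have y: "(inner E (v p))\<^sup>2 \<le> (3 * V * Kn)\<^sup>2" if p: "p \<in> {1..d}" for p
  proof -
    have "\<bar>inner E (v p)\<bar> \<le> norm E * norm (v p)" by (rule Cauchy_Schwarz_ineq2)
    then have "\<bar>inner E (v p)\<bar> \<le> 3 * V * Kn" using vnorm[OF p] Enorm by simp
    then have "\<bar>inner E (v p)\<bar>\<^sup>2 \<le> (3 * V * Kn)\<^sup>2" by (rule power_mono) simp
    then show ?thesis by simp
  qed
  have x: "c / 4 * (norm Dl)\<^sup>2 \<le> (\<Sum>p=1..d. (inner Dl (v p))\<^sup>2)"
    by (rule proj_bound[OF d vnorm conv c proj])
  have a2: "\<kappa>\<^sup>2 * (real n)\<^sup>2 \<le> a\<^sup>2"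
  proof -
    have "\<kappa> * real n \<le> \<bar>a\<bar>" using kap(2) by (simp add: a_def hk_def)
    then have "(\<kappa> * real n)\<^sup>2 \<le> \<bar>a\<bar>\<^sup>2" by (rule power_mono) (use kap(1) in simp)
    then show ?thesis by (simp add: power_mult_distrib)
  qed
  have sumQ: "c * \<kappa>\<^sup>2 / 16 * ((real n)\<^sup>2 * (norm Dl)\<^sup>2) \<le> (\<Sum>p=1..d. (Q p)\<^sup>2)"
  proof -
    have f1: "(\<Sum>p=1..d. (Q p)\<^sup>2) \<ge> (\<Sum>p=1..d. (a * inner Dl (v p))\<^sup>2 / 2 - (inner E (v p))\<^sup>2)"
      unfolding Qeq by (intro sum_mono sq_ineq)
    have f2: "(\<Sum>p=1..d. (a * inner Dl (v p))\<^sup>2 / 2 - (inner E (v p))\<^sup>2)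
        = a\<^sup>2 / 2 * (\<Sum>p=1..d. (inner Dl (v p))\<^sup>2) - (\<Sum>p=1..d. (inner E (v p))\<^sup>2)"
      by (simp add: sum_subtractf sum_distrib_left power_mult_distrib)
    have f3: "(\<Sum>p=1..d. (inner E (v p))\<^sup>2) \<le> real d * (3 * V * Kn)\<^sup>2"
      using sum_mono[of "{1..d}" "\<lambda>p. (inner E (v p))\<^sup>2" "\<lambda>p. (3 * V * Kn)\<^sup>2"] y by simp
    have f4: "a\<^sup>2 / 2 * (\<Sum>p=1..d. (inner Dl (v p))\<^sup>2) \<ge> \<kappa>\<^sup>2 * (real n)\<^sup>2 / 2 * (c / 4 * (norm Dl)\<^sup>2)"
      using a2 x c by (intro mult_mono) auto
    have "(\<Sum>p=1..d. (Q p)\<^sup>2) \<ge> \<kappa>\<^sup>2 * (real n)\<^sup>2 / 2 * (c / 4 * (norm Dl)\<^sup>2) - real d * (3 * V * Kn)\<^sup>2"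
      using f1 f2 f3 f4 by linarith
    moreover have "\<kappa>\<^sup>2 * (real n)\<^sup>2 / 2 * (c / 4 * (norm Dl)\<^sup>2) = 2 * (c * \<kappa>\<^sup>2 / 16 * ((real n)\<^sup>2 * (norm Dl)\<^sup>2))"
      by (simp add: field_simps)
    ultimately show ?thesis using big by linarith
  qed
  have d1: "1 \<in> {1..d}" using d by simp
  have Lc0: "Lc > 0" using lam[OF d1] by linarith
  have Dl0: "real n * (norm Dl)\<^sup>2 > 0"
  proof -
    have "0 < c * \<kappa>\<^sup>2 / (16 * (B\<^sup>2 + 1)) * (real n * (norm Dl)\<^sup>2)" using Lc Lc0 by linarith
    moreover have "c * \<kappa>\<^sup>2 / (16 * (B\<^sup>2 + 1)) > 0"
    proof -
      have "0 < B\<^sup>2 + 1" by (simp add: add_nonneg_pos)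
      then have "0 < 16 * (B\<^sup>2 + 1)" by simp
      moreover have "0 < c * \<kappa>\<^sup>2" using c kap by simp
      ultimately show ?thesis by (rule divide_pos_pos[rotated])
    qed
    ultimately show ?thesis using zero_less_mult_pos by blast
  qed
  define val where "val k' = (\<Sum>p=1..d. (1 / lam p) * (1 / real n) *
      (\<Sum>i=1..n. h ((real i - real k') / real n) * (\<eta> i p - (\<Sum>j=1..n. \<eta> j p) / real n))\<^sup>2)" for k'
  have valk: "val k = (\<Sum>p=1..d. (1 / lam p) * (1 / real n) * (Q p)\<^sup>2)" by (simp add: val_def Q_def hk_def)
  have tw: "(1 / Lc) * (1 / real n) * (Q p)\<^sup>2 \<le> (1 / lam p) * (1 / real n) * (Q p)\<^sup>2" if p: "p \<in> {1..d}" for p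
  proof -
    have "1 / Lc \<le> 1 / lam p" using lam[OF p] by (intro divide_left_mono) auto
    then have "1 / Lc * (1 / real n) \<le> 1 / lam p * (1 / real n)" by (rule mult_right_mono) simp
    then show ?thesis by (rule mult_right_mono) simp
  qed
  have "val k \<ge> (\<Sum>p=1..d. (1 / Lc) * (1 / real n) * (Q p)\<^sup>2)"
    unfolding valk by (rule sum_mono[OF tw])
  also have "(\<Sum>p=1..d. (1 / Lc) * (1 / real n) * (Q p)\<^sup>2) = (\<Sum>p=1..d. (Q p)\<^sup>2) / (Lc * real n)"
    by (simp add: sum_divide_distrib)
  finally have v1: "val k \<ge> (\<Sum>p=1..d. (Q p)\<^sup>2) / (Lc * real n)" .
  have "(\<Sum>p=1..d. (Q p)\<^sup>2) / (Lc * real n) \<ge> c * \<kappa>\<^sup>2 / 16 * ((real n)\<^sup>2 * (norm Dl)\<^sup>2) / (Lc * real n)"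
    using sumQ Lc0 n by (intro divide_right_mono) auto
  moreover have "c * \<kappa>\<^sup>2 / 16 * ((real n)\<^sup>2 * (norm Dl)\<^sup>2) / (Lc * real n) \<ge> B\<^sup>2 + 1"
  proof -
    have "c * \<kappa>\<^sup>2 / 16 * ((real n)\<^sup>2 * (norm Dl)\<^sup>2) / (Lc * real n)
        = (c * \<kappa>\<^sup>2 / 16) * (real n * (norm Dl)\<^sup>2) / Lc"
      using n by (simp add: power2_eq_square field_simps)
    moreover have "(B\<^sup>2 + 1) * Lc \<le> (c * \<kappa>\<^sup>2 / 16) * (real n * (norm Dl)\<^sup>2)"
    proof -
      have "(B\<^sup>2 + 1) * Lc \<le> (B\<^sup>2 + 1) * (c * \<kappa>\<^sup>2 / (16 * (B\<^sup>2 + 1)) * (real n * (norm Dl)\<^sup>2))"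
        using Lc by (intro mult_left_mono) auto
      also have "\<dots> = (c * \<kappa>\<^sup>2 / 16) * (real n * (norm Dl)\<^sup>2)"
      proof -
        have "0 < B\<^sup>2 + 1" by (simp add: add_nonneg_pos)
        then have "B\<^sup>2 + 1 \<noteq> 0" by simp
        then show ?thesis by (simp add: field_simps)
      qed
      finally show ?thesis .
    qed
    ultimately show ?thesis using Lc0 by (simp add: pos_le_divide_eq)
  qed
  ultimately have vk: "val k \<ge> B\<^sup>2 + 1" using v1 by linarith
  have T: "T_PC h d \<eta> lam n = sqrt (Max (val ` {1..<n}))"
    unfolding T_PC_def val_def by simp
  have "val k \<le> Max (val ` {1..<n})" using k by (intro Max_ge) auto
  then have "B\<^sup>2 < Max (val ` {1..<n})" using vk by linarith
  then have "B < sqrt (Max (val ` {1..<n}))" by (rule real_less_rsqrt)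
  moreover have "\<eta> = (\<lambda>i p. inner (mu + g (real i / real n) *\<^sub>R Dl + e i) (v p))"
    by (intro ext) (simp add: \<eta>_def)
  ultimately show ?thesis using T by simp
qed

theorem theorem3p4:
  fixes M :: "'w measure"
    and eps :: "int \<Rightarrow> 'w \<Rightarrow> 'a::{real_inner,banach,second_countable_topology}"
    and mu :: 'a and Delta :: "nat \<Rightarrow> 'a" and g :: "real \<Rightarrow> real" and h :: "real \<Rightarrow> real"
    and X :: "nat \<Rightarrow> nat \<Rightarrow> 'w \<Rightarrow> 'a"
    and k :: real
    and P :: "nat set" and lam_eps :: "nat \<Rightarrow> real" and v_eps :: "nat \<Rightarrow> 'a"
    and N :: "'b measure" and W :: "'b \<Rightarrow> real \<Rightarrow> 'a"
    and Chat :: "nat \<Rightarrow> 'w \<Rightarrow> ('a \<Rightarrow>\<^sub>L 'a)"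
    and d :: nat and vhat :: "nat \<Rightarrow> nat \<Rightarrow> 'w \<Rightarrow> 'a" and lamhat :: "nat \<Rightarrow> nat \<Rightarrow> 'w \<Rightarrow> real"
    and vt :: "nat \<Rightarrow> 'a" and c :: real and \<alpha> :: real
  assumes M: "prob_space M"
    \<comment> \<open>model\<close>
    and X_def: "\<And>n i \<omega>. X n i \<omega> = mu + g (real i / real n) *\<^sub>R Delta n + eps (int i) \<omega>"
    and Delta_lim: "filterlim (\<lambda>n. real n * (norm (Delta n))\<^sup>2) at_top sequentially"
    \<comment> \<open>assumptions on g\<close>
    and g_nonconst: "\<exists>x\<in>{0..1}. \<exists>y\<in>{0..1}. g x \<noteq> g y"
    and g_bdd: "bounded (g ` {0..1})"
    and g_int: "g integrable_on {0..1}"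
    and g_pc: "piecewise_continuous_on01 g"
    and g0: "g 0 = 0"
    \<comment> \<open>(A1)\<close>
    and eps_meas: "\<And>i. eps i \<in> borel_measurable M"
    and eps_centered: "(\<integral>\<omega>. eps 0 \<omega> \<partial>M) = 0"
    and eps_stat: "strictly_stationary M eps"
    and k_gt: "k > 2"
    and eps_moment: "integrable M (\<lambda>\<omega>. norm (eps 1 \<omega>) powr k)"
    and C_summable: "(\<lambda>r. onorm (cov_op M eps r)) summable_on UNIV"
    and C_nonzero: "\<exists>x. lrv_op M eps x \<noteq> 0"
    and P_shape: "P = {1..} \<or> (\<exists>m. P = {1..m})"
    and v_eps_orth: "\<And>p q. p \<in> P \<Longrightarrow> q \<in> P \<Longrightarrow> inner (v_eps p) (v_eps q) = (if p = q then 1 else 0)"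
    and v_eps_basis: "closure (span (v_eps ` P)) = UNIV"
    and lam_eps_mono: "\<And>p q. p \<in> P \<Longrightarrow> q \<in> P \<Longrightarrow> p \<le> q \<Longrightarrow> lam_eps q \<le> lam_eps p"
    and C_decomp: "\<And>x. ((\<lambda>p. (lam_eps p * inner (v_eps p) x) *\<^sub>R v_eps p) has_sum lrv_op M eps x) P"
    and cov_summable: "(\<lambda>(p, l). \<bar>real_cov M (\<lambda>\<omega>. inner (eps 0 \<omega>) (v_eps p)) (\<lambda>\<omega>. inner (eps l \<omega>) (v_eps p))\<bar>)
                         summable_on (P \<times> (UNIV :: int set))"
    \<comment> \<open>(A2)\<close>
    and W_BM: "hilbert_BM N W (lrv_op M eps)"
    and A2: "weak_conv_D M (\<lambda>n \<omega> t. (1 / sqrt (real n)) *\<^sub>R (\<Sum>i=1..nat \<lfloor>t * real n\<rfloor>. eps (int i) \<omega>)) N W"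
    \<comment> \<open>the operator C-hat\<close>
    and Chat_data: "\<exists>F. \<forall>n \<omega>. Chat n \<omega> = F n (map (\<lambda>i. X n i \<omega>) [1..<n+1])"
    and Chat_sa: "\<And>n \<omega> x y. inner (blinfun_apply (Chat n \<omega>) x) y = inner x (blinfun_apply (Chat n \<omega>) y)"
    and Chat_psd: "\<And>n \<omega> x. 0 \<le> inner (blinfun_apply (Chat n \<omega>) x) x"
    and Chat_meas: "\<And>n. (\<lambda>\<omega>. norm (Chat n \<omega>)) \<in> borel_measurable M"
    and Chat_small: "o_P M (\<lambda>n \<omega>. norm (Chat n \<omega>)) (\<lambda>n. real n * (norm (Delta n))\<^sup>2)"
    \<comment> \<open>its top-d eigenpairs\<close>
    and vhat_meas: "\<And>n p. vhat n p \<in> borel_measurable M"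
    and lamhat_meas: "\<And>n p. lamhat n p \<in> borel_measurable M"
    and vhat_orth: "\<And>n \<omega> p q. p \<in> {1..d} \<Longrightarrow> q \<in> {1..d} \<Longrightarrow>
                      inner (vhat n p \<omega>) (vhat n q \<omega>) = (if p = q then 1 else 0)"
    and vhat_eig: "\<And>n \<omega> p. p \<in> {1..d} \<Longrightarrow> blinfun_apply (Chat n \<omega>) (vhat n p \<omega>) = lamhat n p \<omega> *\<^sub>R vhat n p \<omega>"
    and lamhat_top: "\<And>n \<omega> p u m. p \<in> {1..d} \<Longrightarrow> u \<noteq> 0 \<Longrightarrow> blinfun_apply (Chat n \<omega>) u = m *\<^sub>R u \<Longrightarrow>
                      (\<forall>q\<in>{1..<p}. inner u (vhat n q \<omega>) = 0) \<Longrightarrow> m \<le> lamhat n p \<omega>"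
    and lamhat_pos: "\<And>n \<omega> p. p \<in> {1..d} \<Longrightarrow> 0 < lamhat n p \<omega>"
    \<comment> \<open>the limits v-tilde\<close>
    and vt_orth: "\<And>p q. p \<in> {1..d} \<Longrightarrow> q \<in> {1..d} \<Longrightarrow> inner (vt p) (vt q) = (if p = q then 1 else 0)"
    and vhat_conv: "\<And>p. p \<in> {1..d} \<Longrightarrow>
        o_P M (\<lambda>n \<omega>. norm (vhat n p \<omega> - sgn (inner (vhat n p \<omega>) (vt p)) *\<^sub>R vt p)) (\<lambda>n. 1)"
    and c_pos: "0 < c" and c_le: "c \<le> 1"
    and Delta_proj: "\<And>n. (\<Sum>p=1..d. (inner (Delta n) (vt p))\<^sup>2) \<ge> c * (norm (Delta n))\<^sup>2"
    \<comment> \<open>assumptions on h\<close>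
    and h_nonconst: "\<exists>x\<in>{-1..1}. \<exists>y\<in>{-1..1}. h x \<noteq> h y"
    and h_zero: "\<And>x. x \<in> {-1..0} \<Longrightarrow> h x = 0"
    and h_bv: "bounded_variation_on h (-1) 1"
    and alpha_pos: "\<alpha> > 0"
    and h_holder: "holder_on \<alpha> {0..1} h"
    and hg: "(SUP t\<in>{0..1}. \<bar>integral {0..1} (\<lambda>x. h (x - t) * g x)
               - integral {0..1} g * integral {0..1} (\<lambda>x. h (x - t))\<bar>) > 0"
  shows "diverges_in_prob M (\<lambda>n \<omega>. T_PC h d (\<lambda>i p. inner (X n i \<omega>) (vhat n p \<omega>)) (\<lambda>p. lamhat n p \<omega>) n)"
proof -
  interpret M: prob_space M by (rule M)
  obtain \<kappa> kk where kap0: "\<kappa> > 0" and evD: "\<forall>\<^sub>F n in sequentially. 1 \<le> kk n \<and> kk n < n \<and>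
     \<kappa> * real n \<le> \<bar>\<Sum>i=1..n. h ((real i - real (kk n)) / real n) *
        (g (real i / real n) - (\<Sum>j=1..n. g (real j / real n)) / real n)\<bar>"
    using det_main[OF g_bdd g_pc h_zero h_bv alpha_pos h_holder hg] by blast
  have hm1: "h (-1) = 0" using h_zero by simp
  obtain V where V0: "V \<ge> 0" and hV: "\<And>x. x \<in> {-1..1} \<Longrightarrow> \<bar>h x\<bar> \<le> V"
    and bv: "\<And>xs. sorted xs \<Longrightarrow> set xs \<subseteq> {-1..1} \<Longrightarrow> (\<Sum>j<length xs - 1. \<bar>h (xs!(Suc j)) - h (xs!j)\<bar>) \<le> V"
    using bv_facts[OF h_bv hm1] by blast
  have d1: "d \<ge> 1"
  proof (rule ccontr)
    assume "\<not> d \<ge> 1"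
    then have "d = 0" by simp
    then have "\<And>n. c * (norm (Delta n))\<^sup>2 \<le> 0" using Delta_proj by simp
    then have "\<And>n. (norm (Delta n))\<^sup>2 \<le> 0" using c_pos by (simp add: mult_le_0_iff)
    then have "\<And>n. (norm (Delta n))\<^sup>2 = 0" by (meson antisym zero_le_power2)
    then have z: "\<And>n. real n * (norm (Delta n))\<^sup>2 = 0" by simp
    have "\<forall>\<^sub>F n in sequentially. 1 \<le> real n * (norm (Delta n))\<^sup>2"
      using Delta_lim by (simp add: filterlim_at_top)
    then have "\<forall>\<^sub>F n in sequentially. False" by (simp add: z)
    then show False by simp
  qed
  have Xeq: "X n i = (\<lambda>\<omega>. mu + g (real i / real n) *\<^sub>R Delta n + eps (int i) \<omega>)" for n i
    by (rule ext) (rule X_def)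
  have Xm: "X n i \<in> borel_measurable M" for n i
    unfolding Xeq using eps_meas[of "int i"] by measurable
  have Tm: "(\<lambda>\<omega>. T_PC h d (\<lambda>i p. inner (X n i \<omega>) (vhat n p \<omega>)) (\<lambda>p. lamhat n p \<omega>) n) \<in> borel_measurable M" for n
    unfolding T_PC_def using Xm vhat_meas lamhat_meas by measurable
  show ?thesis unfolding diverges_in_prob_def
  proof
    fix B :: real
    define T where "T n \<omega> = T_PC h d (\<lambda>i p. inner (X n i \<omega>) (vhat n p \<omega>)) (\<lambda>p. lamhat n p \<omega>) n" for n \<omega>
    define A where "A n = {\<omega>\<in>space M. B < T n \<omega>}" for n
    have A_sets: "A n \<in> sets M" for n unfolding A_def T_def using Tm[of n] by measurable
    have main: "\<forall>\<^sub>F n in sequentially. 1 - \<epsilon> < measure M (A n)" if \<epsilon>: "\<epsilon> > 0" for \<epsilon>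
    proof -
      define \<delta> where "\<delta> = c / (4 * real d)"
      define e0 where "e0 = c * \<kappa>\<^sup>2 / (16 * (B\<^sup>2 + 1))"
      have e0p: "e0 > 0"
      proof -
        have "0 < B\<^sup>2 + 1" by (simp add: add_nonneg_pos)
        then have "0 < 16 * (B\<^sup>2 + 1)" by simp
        moreover have "0 < c * \<kappa>\<^sup>2" using c_pos kap0 by simp
        ultimately show ?thesis unfolding e0_def by (rule divide_pos_pos[rotated])
      qed
      have \<delta>p: "\<delta> > 0" using c_pos d1 by (simp add: \<delta>_def)
      have e3: "\<epsilon> / 3 > 0" using \<epsilon> by simp
      obtain K where K0: "K > 0" and evS: "\<forall>\<^sub>F n in sequentially.
          measure M {\<omega>\<in>space M. \<exists>j\<in>{1..n}. K * sqrt (real n) < norm (\<Sum>i=1..j. eps (int i) \<omega>)} < \<epsilon> / 3"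
        using tightness[OF M eps_meas W_BM A2 e3] by blast
      have evP: "\<forall>\<^sub>F n in sequentially. \<forall>p\<in>{1..d}.
          measure M {\<omega>\<in>space M. \<bar>norm (vhat n p \<omega> - sgn (inner (vhat n p \<omega>) (vt p)) *\<^sub>R vt p)\<bar> > \<delta> * 1} < \<epsilon> / 3 / real d"
      proof (rule eventually_ball_finite)
        show "finite {1..d}" by simp
        show "\<forall>p\<in>{1..d}. \<forall>\<^sub>F n in sequentially.
          measure M {\<omega>\<in>space M. \<bar>norm (vhat n p \<omega> - sgn (inner (vhat n p \<omega>) (vt p)) *\<^sub>R vt p)\<bar> > \<delta> * 1} < \<epsilon> / 3 / real d"
        proof
          fix p assume p: "p \<in> {1..d}"
          have "(\<lambda>n. measure M {\<omega>\<in>space M. \<bar>norm (vhat n p \<omega> - sgn (inner (vhat n p \<omega>) (vt p)) *\<^sub>R vt p)\<bar> > \<delta> * 1}) \<longlonglongrightarrow> 0"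
            using vhat_conv[OF p] \<delta>p unfolding o_P_def by blast
          moreover have "\<epsilon> / 3 / real d > 0" using \<epsilon> d1 by simp
          ultimately show "\<forall>\<^sub>F n in sequentially.
            measure M {\<omega>\<in>space M. \<bar>norm (vhat n p \<omega> - sgn (inner (vhat n p \<omega>) (vt p)) *\<^sub>R vt p)\<bar> > \<delta> * 1} < \<epsilon> / 3 / real d"
            by (rule order_tendstoD)
        qed
      qed
      have evC: "\<forall>\<^sub>F n in sequentially.
          measure M {\<omega>\<in>space M. \<bar>norm (Chat n \<omega>)\<bar> > e0 * (real n * (norm (Delta n))\<^sup>2)} < \<epsilon> / 3"
      proof -
        have "(\<lambda>n. measure M {\<omega>\<in>space M. \<bar>norm (Chat n \<omega>)\<bar> > e0 * (real n * (norm (Delta n))\<^sup>2)}) \<longlonglongrightarrow> 0"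
          using Chat_small e0p unfolding o_P_def by blast
        then show ?thesis using e3 by (rule order_tendstoD)
      qed
      define R where "R = 144 * real d * V\<^sup>2 * K\<^sup>2 / (c * \<kappa>\<^sup>2)"
      have evR: "\<forall>\<^sub>F n in sequentially. R \<le> real n * (norm (Delta n))\<^sup>2"
        using Delta_lim by (simp add: filterlim_at_top)
      have "\<forall>\<^sub>F n in sequentially. 1 - \<epsilon> < measure M (A n)"
        using evD evS evP evC evR
      proof eventually_elim
        case (elim n)
        define BP where "BP p = {\<omega>\<in>space M. \<bar>norm (vhat n p \<omega> - sgn (inner (vhat n p \<omega>) (vt p)) *\<^sub>R vt p)\<bar> > \<delta> * 1}" for p
        define BC where "BC = {\<omega>\<in>space M. \<bar>norm (Chat n \<omega>)\<bar> > e0 * (real n * (norm (Delta n))\<^sup>2)}"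
        define BS where "BS = {\<omega>\<in>space M. \<exists>j\<in>{1..n}. K * sqrt (real n) < norm (\<Sum>i=1..j. eps (int i) \<omega>)}"
        have BP_sets: "BP p \<in> sets M" for p unfolding BP_def using vhat_meas[of n p] by measurable
        have BC_sets: "BC \<in> sets M" unfolding BC_def using Chat_meas[of n] by measurable
        have BS_sets: "BS \<in> sets M" unfolding BS_def using eps_meas by measurable
        have sub: "space M - A n \<subseteq> (\<Union>p\<in>{1..d}. BP p) \<union> BC \<union> BS"
        proof
          fix \<omega> assume \<omega>: "\<omega> \<in> space M - A n"
          show "\<omega> \<in> (\<Union>p\<in>{1..d}. BP p) \<union> BC \<union> BS"
          proof (rule ccontr)
            assume nb: "\<omega> \<notin> (\<Union>p\<in>{1..d}. BP p) \<union> BC \<union> BS"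
            have k: "1 \<le> kk n" "kk n < n" using elim(1) by auto
            have vnorm: "norm (vhat n p \<omega>) = 1" if "p \<in> {1..d}" for p
              using vhat_orth[OF that that, of n \<omega>] by (simp add: norm_eq_sqrt_inner)
            have lam: "0 < lamhat n p \<omega> \<and> lamhat n p \<omega> \<le> norm (Chat n \<omega>)" if p: "p \<in> {1..d}" for p
            proof
              show lp: "0 < lamhat n p \<omega>" by (rule lamhat_pos[OF p])
              have "lamhat n p \<omega> = norm (lamhat n p \<omega> *\<^sub>R vhat n p \<omega>)" using lp vnorm[OF p] by simp
              also have "\<dots> = norm (blinfun_apply (Chat n \<omega>) (vhat n p \<omega>))" using vhat_eig[OF p] by simp
              also have "\<dots> \<le> norm (Chat n \<omega>) * norm (vhat n p \<omega>)" by (rule norm_blinfun)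
              finally show "lamhat n p \<omega> \<le> norm (Chat n \<omega>)" using vnorm[OF p] by simp
            qed
            have conv: "norm (vhat n p \<omega> - sgn (inner (vhat n p \<omega>) (vt p)) *\<^sub>R vt p) \<le> c / (4 * real d)" if p: "p \<in> {1..d}" for p
            proof -
              have "\<omega> \<notin> BP p" using nb p by blast
              then have "\<not> (\<delta> * 1 < \<bar>norm (vhat n p \<omega> - sgn (inner (vhat n p \<omega>) (vt p)) *\<^sub>R vt p)\<bar>)"
                using \<omega> unfolding BP_def by blast
              then show ?thesis by (simp add: \<delta>_def not_less)
            qed
            have S: "norm (\<Sum>i=1..j. eps (int i) \<omega>) \<le> K * sqrt (real n)" if "j \<in> {1..n}" for j
              using nb \<omega> that by (auto simp: BS_def not_less)
            have Lc: "norm (Chat n \<omega>) \<le> c * \<kappa>\<^sup>2 / (16 * (B\<^sup>2 + 1)) * (real n * (norm (Delta n))\<^sup>2)"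
              using nb \<omega> by (auto simp: BC_def e0_def not_less)
            have big: "real d * (3 * V * (K * sqrt (real n)))\<^sup>2 \<le> c * \<kappa>\<^sup>2 / 16 * ((real n)\<^sup>2 * (norm (Delta n))\<^sup>2)"
            proof -
              have ck: "c * \<kappa>\<^sup>2 > 0" using c_pos kap0 by simp
              have "real d * (3 * V * (K * sqrt (real n)))\<^sup>2 = 9 * real d * V\<^sup>2 * K\<^sup>2 * real n"
                by (simp add: power_mult_distrib)
              also have "\<dots> = (c * \<kappa>\<^sup>2 / 16) * R * real n"
              proof -
                have "c \<noteq> 0" "\<kappa> \<noteq> 0" using c_pos kap0 by auto
                then show ?thesis by (simp add: R_def field_simps)
              qed
              also have "\<dots> \<le> (c * \<kappa>\<^sup>2 / 16) * (real n * (norm (Delta n))\<^sup>2) * real n"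
                using elim(5) ck by (intro mult_right_mono mult_left_mono) auto
              also have "\<dots> = c * \<kappa>\<^sup>2 / 16 * ((real n)\<^sup>2 * (norm (Delta n))\<^sup>2)"
                by (simp add: power2_eq_square)
              finally show ?thesis .
            qed
            have "B < T_PC h d (\<lambda>i p. inner (mu + g (real i / real n) *\<^sub>R Delta n + eps (int i) \<omega>) (vhat n p \<omega>))
                    (\<lambda>p. lamhat n p \<omega>) n"
              by (rule core[OF k d1 vnorm lam conv c_pos c_le Delta_proj hV bv kap0 _ S Lc big])
                (use elim(1) in auto)
            then have "B < T n \<omega>" by (simp add: T_def X_def)
            then show False using \<omega> by (simp add: A_def)
          qed
        qed
        have "measure M (space M - A n) \<le> measure M ((\<Union>p\<in>{1..d}. BP p) \<union> BC \<union> BS)"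
          using sub BP_sets BC_sets BS_sets by (intro M.finite_measure_mono) auto
        also have "\<dots> \<le> measure M (\<Union>p\<in>{1..d}. BP p) + measure M BC + measure M BS"
        proof -
          have "measure M ((\<Union>p\<in>{1..d}. BP p) \<union> BC \<union> BS) \<le> measure M ((\<Union>p\<in>{1..d}. BP p) \<union> BC) + measure M BS"
            using BP_sets BC_sets BS_sets by (intro measure_Un_le) auto
          also have "measure M ((\<Union>p\<in>{1..d}. BP p) \<union> BC) \<le> measure M (\<Union>p\<in>{1..d}. BP p) + measure M BC"
            using BP_sets BC_sets by (intro measure_Un_le) auto
          finally show ?thesis by simp
        qed
        also have "measure M (\<Union>p\<in>{1..d}. BP p) \<le> (\<Sum>p\<in>{1..d}. measure M (BP p))"
          using BP_sets by (intro M.finite_measure_subadditive_finite) auto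
        also have "(\<Sum>p\<in>{1..d}. measure M (BP p)) < (\<Sum>p\<in>{1..d}. \<epsilon> / 3 / real d)"
          using elim(3) d1 by (intro sum_strict_mono) (auto simp: BP_def)
        also have "(\<Sum>p\<in>{1..d}. \<epsilon> / 3 / real d) = \<epsilon> / 3" using d1 by simp
        finally have "measure M (space M - A n) < \<epsilon> / 3 + measure M BC + measure M BS" by simp
        moreover have "measure M BC < \<epsilon> / 3" using elim(4) by (simp add: BC_def)
        moreover have "measure M BS < \<epsilon> / 3" using elim(2) by (simp add: BS_def)
        moreover have "measure M (space M - A n) = 1 - measure M (A n)"
          using A_sets M.prob_compl by simp
        ultimately show ?case by linarith
      qed
      then show ?thesis .
    qed
    show "(\<lambda>n. measure M {\<omega>\<in>space M. T_PC h d (\<lambda>i p. inner (X n i \<omega>) (vhat n p \<omega>)) (\<lambda>p. lamhat n p \<omega>) n > B}) \<longlonglongrightarrow> 1"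
    proof (rule tendstoI)
      fix \<epsilon> :: real assume \<epsilon>: "\<epsilon> > 0"
      show "\<forall>\<^sub>F n in sequentially. dist (measure M {\<omega>\<in>space M. T_PC h d (\<lambda>i p. inner (X n i \<omega>) (vhat n p \<omega>)) (\<lambda>p. lamhat n p \<omega>) n > B}) 1 < \<epsilon>"
        using main[OF \<epsilon>]
      proof eventually_elim
        case (elim n)
        have "measure M (A n) \<le> 1" by (rule M.prob_le_1)
        then show ?case using elim by (simp add: A_def T_def dist_real_def)
      qed
    qed
  qed
qed


end
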